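(* Let $\mathbf p$ be a critical reproduction law whose tail satisfies $\bar F(n)=n^{-\alpha}\ell(n)$ for $n\ge1$, with $\ell$ slowly varying and $\alpha>2$; let $\sigma^2$ be its (finite) variance and $\varphi$ an asymptotic inverse of $\bar F$ ($\bar F(\varphi(\varepsilon))\sim\varepsilon$ as $\varepsilon\to0+$). Let $f:\mathbb{R}_+\to\mathbb{R}_+$ be continuous with $f\equiv0$ on some neighbourhood of $0$, and let $a\ge0$. For $k\ge1$ set $$\bar{\mathcal L}_k=1-\mathbb{E}\Big(\exp\Big(-ak^{-2}T_1-\sum_{i=1}^{T_1}f\big(X_i/\varphi(k^{-2})\big)\Big)\Big).$$ Then $$\lim_{k\to\infty}k\,\bar{\mathcal L}_k=\frac{\sqrt2}{\sigma}\Big(a+\alpha\int_0^\infty\big(1-e^{-f(x)}\big)x^{-\alpha-1}\,\mathrm dx\Big)^{1/2}.$$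
   Context: $\mathbf p=(p(n))_{n\in\mathbb{N}}$ is a probability measure on the nonnegative integers with $\sum_n np(n)=1$, $\mathbf p\ne\delta_1$; $\bar F(n)=\sum_{i>n}p(i)$, $\sigma^2=\sum_nn^2p(n)-1$. Consider a Galton–Watson process with reproduction law $\mathbf p$ started from a single ancestor; $T_1$ is its total population size (ancestor included) and $X_1,\dots,X_{T_1}$ are the numbers of children of its individuals, enumerated in some arbitrary order. *)

theory Defs
  imports "HOL-Analysis.Analysis"
begin

text \<open>Finite ordered (plane) rooted trees: the genealogical tree of a Galton--Watson
  process; each node carries the list of its children.\<close>
datatype ptree = Node "ptree list"

text \<open>Probability that the GW tree with reproduction law p equals the given plane tree.\<close>
fun gw_weight :: "(nat \<Rightarrow> real) \<Rightarrow> ptree \<Rightarrow> real" where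
  "gw_weight p (Node ts) = p (length ts) * prod_list (map (gw_weight p) ts)"

fun tsize :: "ptree \<Rightarrow> nat" where
  "tsize (Node ts) = 1 + sum_list (map tsize ts)"

fun node_sum :: "(nat \<Rightarrow> real) \<Rightarrow> ptree \<Rightarrow> real" where
  "node_sum g (Node ts) = g (length ts) + sum_list (map (node_sum g) ts)"

definition Fbar :: "(nat \<Rightarrow> real) \<Rightarrow> real \<Rightarrow> real" where
  "Fbar p x = (\<Sum>i. if real i > x then p i else 0)"

definition slowly_varying :: "(real \<Rightarrow> real) \<Rightarrow> bool" where
  "slowly_varying l \<longleftrightarrow> l \<in> borel_measurable borel \<and> (\<forall>\<^sub>F x in at_top. l x > 0) \<and>
     (\<forall>lam>0. ((\<lambda>x. l (lam * x) / l x) \<longlongrightarrow> 1) at_top)"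

definition gw_sigma :: "(nat \<Rightarrow> real) \<Rightarrow> real" where
  "gw_sigma p = sqrt ((\<Sum>n. real n ^ 2 * p n) - 1)"

text \<open>\<open>1 - E(exp(-a k^{-2} T_1 - \<Sum>_{i\<le>T_1} f(X_i/\<phi>(k^{-2}))))\<close>, the expectation over the
  (a.s. finite) GW tree written as a sum over all finite plane trees.\<close>
definition Lbar :: "(nat \<Rightarrow> real) \<Rightarrow> real \<Rightarrow> (real \<Rightarrow> real) \<Rightarrow> (real \<Rightarrow> real) \<Rightarrow> nat \<Rightarrow> real" where
  "Lbar p a f \<phi> k = 1 - (\<Sum>\<^sub>\<infinity>t. gw_weight p t *
      exp (- a / (real k)^2 * real (tsize t)
           - node_sum (\<lambda>n. f (real n / \<phi> (1 / (real k)^2))) t))"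

end

theory Submission
  imports Defs "HOL-Real_Asymp.Real_Asymp"
begin

lemma ennreal_infsum_cmult_left:
  fixes f :: "'a \<Rightarrow> ennreal"
  shows "infsum (\<lambda>x. c * f x) A = c * infsum f A"
proof -
  have "infsum (\<lambda>x. c * f x) A = (SUP F\<in>{F. finite F \<and> F\<subseteq>A}. sum (\<lambda>x. c * f x) F)"
    by (rule nonneg_infsum_complete) simp
  also have "\<dots> = (SUP F\<in>{F. finite F \<and> F\<subseteq>A}. c * sum f F)" by (simp add: sum_distrib_left)
  also have "\<dots> = c * (SUP F\<in>{F. finite F \<and> F\<subseteq>A}. sum f F)" by (simp add: SUP_mult_left_ennreal)
  also have "\<dots> = c * infsum f A" by (subst nonneg_infsum_complete) simp_all
  finally show ?thesis .
qed

lemma ennreal_infsum_cmult_right: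
  fixes f :: "'a \<Rightarrow> ennreal"
  shows "infsum (\<lambda>x. f x * c) A = infsum f A * c"
  using ennreal_infsum_cmult_left[of c f A] by (simp add: mult.commute)

lemma ennreal_infsum_Sigma_le1:
  fixes f :: "'a \<times> 'b \<Rightarrow> ennreal"
  assumes "finite X"
  shows "(\<Sum>x\<in>X. infsum (\<lambda>y. f (x,y)) (B x)) = infsum f (Sigma X B)"
  using assms
proof (induction X rule: finite_induct)
  case empty
  then show ?case by simp
next
  case (insert x X)
  have inj: "inj_on (\<lambda>y. (x,y)) (B x)" by (auto simp: inj_on_def)
  have e1: "infsum (\<lambda>y. f (x,y)) (B x) = infsum f ((\<lambda>y. (x,y)) ` B x)"
    by (subst infsum_reindex[OF inj]) (simp add: o_def)
  have "Sigma (insert x X) B = ((\<lambda>y. (x,y)) ` B x) \<union> Sigma X B" by auto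
  moreover have "((\<lambda>y. (x,y)) ` B x) \<inter> Sigma X B = {}" using insert by auto
  ultimately have "infsum f (Sigma (insert x X) B) = infsum f ((\<lambda>y. (x,y)) ` B x) + infsum f (Sigma X B)"
    by (simp add: infsum_Un_disjoint nonneg_summable_on_complete)
  then show ?case using insert e1 by simp
qed

lemma ennreal_infsum_Sigma:
  fixes f :: "'a \<times> 'b \<Rightarrow> ennreal"
  shows "infsum f (Sigma A B) = infsum (\<lambda>x. infsum (\<lambda>y. f (x,y)) (B x)) A"
proof (rule antisym)
  show "infsum (\<lambda>x. infsum (\<lambda>y. f (x,y)) (B x)) A \<le> infsum f (Sigma A B)"
  proof (subst nonneg_infsum_complete, simp, rule SUP_least)
    fix X assume "X \<in> {F. finite F \<and> F \<subseteq> A}"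
    then have X: "finite X" "X \<subseteq> A" by auto
    have "(\<Sum>x\<in>X. infsum (\<lambda>y. f (x,y)) (B x)) = infsum f (Sigma X B)"
      by (rule ennreal_infsum_Sigma_le1[OF X(1)])
    also have "\<dots> \<le> infsum f (Sigma A B)"
      using X by (intro infsum_mono_neutral) (auto simp: nonneg_summable_on_complete)
    finally show "(\<Sum>x\<in>X. infsum (\<lambda>y. f (x,y)) (B x)) \<le> infsum f (Sigma A B)" .
  qed
next
  show "infsum f (Sigma A B) \<le> infsum (\<lambda>x. infsum (\<lambda>y. f (x,y)) (B x)) A"
  proof (subst nonneg_infsum_complete, simp, rule SUP_least)
    fix F assume "F \<in> {F. finite F \<and> F \<subseteq> Sigma A B}"
    then have F: "finite F" "F \<subseteq> Sigma A B" by auto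
    define X where "X = fst ` F"
    define Y where "Y = (\<lambda>x. B x \<inter> snd ` F)"
    have X: "finite X" "X \<subseteq> A" using F by (auto simp: X_def)
    have "sum f F = infsum f F" using F by simp
    also have "\<dots> \<le> infsum f (Sigma X B)"
      using F by (intro infsum_mono_neutral) (force simp: X_def nonneg_summable_on_complete)+
    also have "\<dots> = (\<Sum>x\<in>X. infsum (\<lambda>y. f (x,y)) (B x))"
      by (rule ennreal_infsum_Sigma_le1[OF X(1), symmetric])
    also have "\<dots> = infsum (\<lambda>x. infsum (\<lambda>y. f (x,y)) (B x)) X"
      using X by simp
    also have "\<dots> \<le> infsum (\<lambda>x. infsum (\<lambda>y. f (x,y)) (B x)) A"
      using X by (intro infsum_mono_neutral) (auto simp: nonneg_summable_on_complete)
    finally show "sum f F \<le> infsum (\<lambda>x. infsum (\<lambda>y. f (x,y)) (B x)) A" .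
  qed
qed

lemma ennreal_infsum_real:
  fixes w :: "'a \<Rightarrow> real"
  assumes "w summable_on A" "\<And>x. x \<in> A \<Longrightarrow> w x \<ge> 0"
  shows "infsum (\<lambda>x. ennreal (w x)) A = ennreal (infsum w A)"
proof -
  have "ennreal (infsum w A) = (SUP F\<in>{F. finite F \<and> F \<subseteq> A}. (ennreal (sum w F)))"
    by (rule infsum_nonneg_is_SUPREMUM_ennreal) (use assms in auto)
  also have "\<dots> = (SUP F\<in>{F. finite F \<and> F \<subseteq> A}. sum (\<lambda>x. ennreal (w x)) F)"
    by (intro SUP_cong refl) (use assms in \<open>auto intro!: sum_ennreal[symmetric]\<close>)
  also have "\<dots> = infsum (\<lambda>x. ennreal (w x)) A"
    by (rule nonneg_infsum_complete[symmetric]) simp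
  finally show ?thesis ..
qed

lemma real_summable_from_ennreal:
  fixes w :: "'a \<Rightarrow> real"
  assumes nn: "\<And>x. x \<in> A \<Longrightarrow> w x \<ge> 0" and fin: "infsum (\<lambda>x. ennreal (w x)) A \<le> ennreal B"
  shows "w summable_on A"
proof (rule nonneg_bdd_above_summable_on)
  show "bdd_above (sum w ` {F. F \<subseteq> A \<and> finite F})"
  proof (rule bdd_aboveI)
    fix y assume "y \<in> sum w ` {F. F \<subseteq> A \<and> finite F}"
    then obtain F where F: "F \<subseteq> A" "finite F" and y: "y = sum w F" by auto
    have "ennreal (sum w F) = sum (\<lambda>x. ennreal (w x)) F"
      using F nn by (intro sum_ennreal[symmetric]) auto
    also have "\<dots> = infsum (\<lambda>x. ennreal (w x)) F" using F by simp
    also have "\<dots> \<le> infsum (\<lambda>x. ennreal (w x)) A"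
      using F by (intro infsum_mono_neutral) (auto simp: nonneg_summable_on_complete)
    also have "\<dots> \<le> ennreal B" by (rule fin)
    finally have "ennreal (sum w F) \<le> ennreal B" .
    moreover have "sum w F \<ge> 0" using F nn by (intro sum_nonneg) auto
    ultimately show "y \<le> max B 0" using y
      by (metis ennreal_le_iff2 max.coboundedI1 max.coboundedI2 order.refl)
  qed
qed (use nn in auto)

definition lists_len :: "'a set \<Rightarrow> nat \<Rightarrow> 'a list set" where
  "lists_len A n = {ts. length ts = n \<and> set ts \<subseteq> A}"

lemma lists_len_Suc: "lists_len A (Suc n) = (\<lambda>(t,ts). t # ts) ` (A \<times> lists_len A n)"
  unfolding lists_len_def
  by (auto simp: length_Suc_conv image_iff)

lemma lists_len_0: "lists_len A 0 = {[]}"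
  unfolding lists_len_def by auto

lemma infsum_lists_len:
  fixes V :: "'a \<Rightarrow> ennreal"
  shows "infsum (\<lambda>ts. prod_list (map V ts)) (lists_len A n) = (infsum V A) ^ n"
proof (induction n)
  case 0
  then show ?case by (simp add: lists_len_0)
next
  case (Suc n)
  have inj: "inj_on (\<lambda>(t,ts). t # ts) (A \<times> lists_len A n)"
    by (auto simp: inj_on_def)
  have "infsum (\<lambda>ts. prod_list (map V ts)) (lists_len A (Suc n))
      = infsum (\<lambda>(t,ts). V t * prod_list (map V ts)) (A \<times> lists_len A n)"
    unfolding lists_len_Suc by (subst infsum_reindex[OF inj]) (simp add: o_def case_prod_unfold)
  also have "\<dots> = infsum (\<lambda>t. infsum (\<lambda>ts. V t * prod_list (map V ts)) (lists_len A n)) A"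
    by (subst ennreal_infsum_Sigma) simp
  also have "\<dots> = infsum (\<lambda>t. V t * (infsum V A) ^ n) A"
    by (simp add: ennreal_infsum_cmult_left Suc)
  also have "\<dots> = infsum V A * (infsum V A) ^ n"
    by (simp add: ennreal_infsum_cmult_right)
  finally show ?case by simp
qed

lemma lists_as_Sigma: "lists A = snd ` (SIGMA n:UNIV. lists_len A n)"
  unfolding lists_len_def by (auto simp: image_iff in_lists_conv_set)

lemma infsum_Node_lists:
  fixes V :: "ptree \<Rightarrow> ennreal" and Q :: "nat \<Rightarrow> ennreal"
  assumes mult: "\<And>ts. V (Node ts) = Q (length ts) * prod_list (map V ts)"
  shows "infsum V (Node ` lists A) = infsum (\<lambda>n. Q n * (infsum V A) ^ n) UNIV"
proof -
  have injN: "inj_on Node (lists A)" by (auto simp: inj_on_def)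
  have injS: "inj_on snd (SIGMA n:UNIV. lists_len A n)"
    by (auto simp: inj_on_def lists_len_def)
  have "infsum V (Node ` lists A) = infsum (\<lambda>ts. V (Node ts)) (lists A)"
    by (subst infsum_reindex[OF injN]) (simp add: o_def)
  also have "\<dots> = infsum (\<lambda>x. V (Node (snd x))) (SIGMA n:UNIV. lists_len A n)"
    unfolding lists_as_Sigma by (subst infsum_reindex[OF injS]) (simp add: o_def)
  also have "\<dots> = infsum (\<lambda>n. infsum (\<lambda>ts. V (Node ts)) (lists_len A n)) UNIV"
    by (subst ennreal_infsum_Sigma) simp
  also have "\<dots> = infsum (\<lambda>n. infsum (\<lambda>ts. Q n * prod_list (map V ts)) (lists_len A n)) UNIV"
    by (intro infsum_cong) (auto simp: mult lists_len_def)
  also have "\<dots> = infsum (\<lambda>n. Q n * (infsum V A) ^ n) UNIV"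
    by (simp add: ennreal_infsum_cmult_left infsum_lists_len)
  finally show ?thesis .
qed

lemma tsize_ge1: "tsize t \<ge> 1"
  by (cases t) auto

lemma tree_fixpoint:
  fixes V :: "ptree \<Rightarrow> ennreal" and Q :: "nat \<Rightarrow> ennreal"
  assumes mult: "\<And>ts. V (Node ts) = Q (length ts) * prod_list (map V ts)"
  shows "infsum V UNIV = infsum (\<lambda>n. Q n * (infsum V UNIV) ^ n) UNIV"
proof -
  have "UNIV = Node ` lists UNIV"
    by (metis ptree.exhaust lists_UNIV surj_def)
  then have "infsum V UNIV = infsum V (Node ` lists UNIV)" by simp
  also have "\<dots> = infsum (\<lambda>n. Q n * (infsum V UNIV) ^ n) UNIV"
    by (rule infsum_Node_lists[OF mult])
  finally show ?thesis .
qed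

lemma tree_least:
  fixes V :: "ptree \<Rightarrow> ennreal" and Q :: "nat \<Rightarrow> ennreal"
  assumes mult: "\<And>ts. V (Node ts) = Q (length ts) * prod_list (map V ts)"
    and z: "infsum (\<lambda>n. Q n * z ^ n) UNIV \<le> z"
  shows "infsum V UNIV \<le> z"
proof -
  have le: "infsum V {t. tsize t \<le> m} \<le> z" for m
  proof (induction m)
    case 0
    have "{t. tsize t \<le> 0} = {}" using tsize_ge1 by (metis (mono_tags) Collect_empty_eq le_zero_eq not_one_le_zero)
    then show ?case by (metis infsum_empty zero_le)
  next
    case (Suc m)
    have sub: "{t. tsize t \<le> Suc m} \<subseteq> Node ` lists {t. tsize t \<le> m}"
    proof
      fix t assume "t \<in> {t. tsize t \<le> Suc m}"
      moreover obtain ts where t: "t = Node ts" by (cases t)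
      ultimately have "sum_list (map tsize ts) \<le> m" by simp
      then have "set ts \<subseteq> {t. tsize t \<le> m}"
        using member_le_sum_list[of _ "map tsize ts"] by fastforce
      then show "t \<in> Node ` lists {t. tsize t \<le> m}" using t by auto
    qed
    have "infsum V {t. tsize t \<le> Suc m} \<le> infsum V (Node ` lists {t. tsize t \<le> m})"
      using sub by (intro infsum_mono_neutral) (auto simp: nonneg_summable_on_complete)
    also have "\<dots> = infsum (\<lambda>n. Q n * (infsum V {t. tsize t \<le> m}) ^ n) UNIV"
      by (rule infsum_Node_lists[OF mult])
    also have "\<dots> \<le> infsum (\<lambda>n. Q n * z ^ n) UNIV"
      using Suc.IH by (intro infsum_mono) (auto simp: nonneg_summable_on_complete intro!: mult_left_mono power_mono)
    also have "\<dots> \<le> z" by (rule z)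
    finally show ?case .
  qed
  have "infsum V UNIV = (SUP F\<in>{F. finite F \<and> F\<subseteq>UNIV}. sum V F)"
    by (rule nonneg_infsum_complete) simp
  also have "\<dots> \<le> z"
  proof (rule SUP_least)
    fix F :: "ptree set" assume "F \<in> {F. finite F \<and> F\<subseteq>UNIV}"
    then have fin: "finite F" by simp
    define m where "m = Max (tsize ` F)"
    have "F \<subseteq> {t. tsize t \<le> m}" using fin by (auto simp: m_def)
    then have "infsum V F \<le> infsum V {t. tsize t \<le> m}"
      using fin by (intro infsum_mono_neutral) (auto simp: nonneg_summable_on_complete)
    then have "sum V F \<le> infsum V {t. tsize t \<le> m}" using fin by simp
    also have "\<dots> \<le> z" by (rule le)
    finally show "sum V F \<le> z" .
  qed
  finally show ?thesis .
qed

lemma ennreal_suminf_real: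
  fixes q :: "nat \<Rightarrow> real"
  assumes "summable q" "\<And>n. q n \<ge> 0"
  shows "infsum (\<lambda>n. ennreal (q n)) UNIV = ennreal (suminf q)"
proof -
  have hs: "(q has_sum suminf q) UNIV"
    using assms by (intro sums_nonneg_imp_has_sum) (auto simp: summable_sums)
  have "infsum (\<lambda>n. ennreal (q n)) UNIV = ennreal (infsum q UNIV)"
    using hs assms by (intro ennreal_infsum_real) (auto simp: summable_on_def)
  also have "infsum q UNIV = suminf q" using hs by (rule infsumI)
  finally show ?thesis .
qed

lemma gw_weight_nonneg: "(\<And>n. p n \<ge> 0) \<Longrightarrow> gw_weight p t \<ge> 0"
proof (induction p t rule: gw_weight.induct)
  case (1 p ts)
  have "prod_list (map (gw_weight p) ts) \<ge> 0"
    using 1 by (induction ts) auto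
  then show ?case using 1 by simp
qed

lemma prod_list_nonneg': "(\<And>x. x \<in> set xs \<Longrightarrow> (x::real) \<ge> 0) \<Longrightarrow> prod_list xs \<ge> 0"
  by (induction xs) auto

lemma ennreal_prod_list: "(\<And>x. x \<in> set xs \<Longrightarrow> x \<ge> 0) \<Longrightarrow> ennreal (prod_list xs) = prod_list (map ennreal xs)"
proof (induction xs)
  case (Cons x xs)
  then have "prod_list xs \<ge> 0" by (intro prod_list_nonneg') auto
  then show ?case using Cons by (simp add: ennreal_mult)
qed simp

lemma gw_weight_exp_list:
  "prod_list (map (\<lambda>t. gw_weight p t * exp (c * real (tsize t) - node_sum g t)) ts)
   = prod_list (map (gw_weight p) ts) * exp (c * real (sum_list (map tsize ts)) - sum_list (map (node_sum g) ts))"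
  by (induction ts) (auto simp: algebra_simps exp_add[symmetric] exp_diff)

lemma gw_fixpoint:
  fixes p g :: "nat \<Rightarrow> real" and c :: real
  assumes p_nonneg: "\<And>n. p n \<ge> 0" and psum: "p sums 1" and c: "c \<le> 0" and g: "\<And>n. g n \<ge> 0"
  defines "w \<equiv> \<lambda>t. gw_weight p t * exp (c * real (tsize t) - node_sum g t)"
  defines "q \<equiv> \<lambda>n. p n * exp (c - g n)"
  shows "w summable_on UNIV" "0 \<le> infsum w UNIV" "infsum w UNIV \<le> 1"
    "summable (\<lambda>n. q n * (infsum w UNIV)^n)"
    "infsum w UNIV = (\<Sum>n. q n * (infsum w UNIV)^n)"
proof -
  have wnn: "w t \<ge> 0" for t unfolding w_def using gw_weight_nonneg[of p t] p_nonneg by simp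
  have qnn: "q n \<ge> 0" for n unfolding q_def using p_nonneg by simp
  have qle: "q n \<le> p n" for n
  proof -
    have "exp (c - g n) \<le> 1" using c g[of n] by simp
    then show ?thesis unfolding q_def using p_nonneg[of n] by (simp add: mult_left_le)
  qed
  have sp: "summable p" using psum by (simp add: sums_iff)
  have sq: "summable q" using qnn qle by (intro summable_comparison_test'[OF sp]) auto
  have wmult: "w (Node ts) = q (length ts) * prod_list (map w ts)" for ts
  proof -
    have "w (Node ts) = p (length ts) * prod_list (map (gw_weight p) ts) *
        exp ((c - g (length ts)) + (c * real (sum_list (map tsize ts)) - sum_list (map (node_sum g) ts)))"
      unfolding w_def by (simp add: algebra_simps)
    also have "\<dots> = q (length ts) * prod_list (map w ts)"
      unfolding q_def w_def gw_weight_exp_list by (simp add: exp_add)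
    finally show ?thesis .
  qed
  define V where "V = (\<lambda>t. ennreal (w t))"
  define Q where "Q = (\<lambda>n. ennreal (q n))"
  have Vmult: "V (Node ts) = Q (length ts) * prod_list (map V ts)" for ts
  proof -
    have "ennreal (prod_list (map w ts)) = prod_list (map V ts)"
      using wnn by (subst ennreal_prod_list) (auto simp: V_def o_def)
    moreover have "prod_list (map w ts) \<ge> 0" using wnn by (intro prod_list_nonneg') auto
    ultimately show ?thesis unfolding V_def Q_def wmult using qnn
      by (simp add: ennreal_mult)
  qed
  have e1: "infsum (\<lambda>n. Q n * 1 ^ n) UNIV = ennreal (suminf q)"
    unfolding Q_def using ennreal_suminf_real[OF sq qnn] by simp
  have "suminf q \<le> 1"
    using suminf_le[OF qle sq sp] psum by (simp add: sums_iff)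
  then have "infsum (\<lambda>n. Q n * 1 ^ n) UNIV \<le> 1" unfolding e1 by (simp add: ennreal_le_1)
  then have U1: "infsum V UNIV \<le> 1" by (rule tree_least[OF Vmult])
  then have U1': "infsum (\<lambda>t. ennreal (w t)) UNIV \<le> ennreal 1" unfolding V_def by simp
  show ws: "w summable_on UNIV"
    by (rule real_summable_from_ennreal[OF _ U1']) (use wnn in auto)
  have eU: "infsum V UNIV = ennreal (infsum w UNIV)"
    unfolding V_def by (rule ennreal_infsum_real[OF ws]) (use wnn in auto)
  show u0: "0 \<le> infsum w UNIV" by (rule infsum_nonneg) (use wnn in auto)
  show u1: "infsum w UNIV \<le> 1" using U1 eU u0 by (metis ennreal_le_1)
  define u where "u = infsum w UNIV"
  have termnn: "q n * u ^ n \<ge> 0" for n using qnn u0 by (simp add: u_def)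
  have termle: "q n * u ^ n \<le> q n" for n
    using qnn u0 u1 by (simp add: u_def mult_left_le power_le_one)
  show st: "summable (\<lambda>n. q n * (infsum w UNIV)^n)"
    using termnn termle unfolding u_def[symmetric] by (intro summable_comparison_test'[OF sq]) auto
  have "ennreal u = infsum V UNIV" using eU u_def by simp
  also have "\<dots> = infsum (\<lambda>n. Q n * (infsum V UNIV) ^ n) UNIV" by (rule tree_fixpoint[OF Vmult])
  also have "\<dots> = infsum (\<lambda>n. ennreal (q n * u ^ n)) UNIV"
    using eU qnn u0 unfolding Q_def u_def by (intro infsum_cong) (simp add: ennreal_mult ennreal_power)
  also have "\<dots> = ennreal (\<Sum>n. q n * u ^ n)"
    using st termnn unfolding u_def[symmetric] by (intro ennreal_suminf_real) auto
  finally have "ennreal u = ennreal (\<Sum>n. q n * u ^ n)" .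
  moreover have "(\<Sum>n. q n * u ^ n) \<ge> 0" using termnn by (intro suminf_nonneg st[unfolded u_def[symmetric]]) 
  ultimately show "infsum w UNIV = (\<Sum>n. q n * (infsum w UNIV)^n)"
    using u0 unfolding u_def by (simp add: ennreal_inj)
qed

locale gwsetting =
  fixes p :: "nat \<Rightarrow> real" and \<alpha> a :: real and l \<phi> f :: "real \<Rightarrow> real"
  assumes p_nonneg: "\<And>n. p n \<ge> 0"
    and p_prob: "p sums 1"
    and p_crit: "(\<lambda>n. real n * p n) sums 1"
    and p_nondeg: "p 1 \<noteq> 1"
    and alpha: "\<alpha> > 2"
    and l_sv: "slowly_varying l"
    and tail: "\<And>n::nat. n \<ge> 1 \<Longrightarrow> Fbar p (real n) = real n powr (-\<alpha>) * l (real n)"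
    and phi_inv: "((\<lambda>\<epsilon>. Fbar p (\<phi> \<epsilon>) / \<epsilon>) \<longlongrightarrow> 1) (at_right 0)"
    and f_cont: "continuous_on {0..} f"
    and f_nonneg: "\<And>x. x \<ge> 0 \<Longrightarrow> f x \<ge> 0"
    and f_zero: "\<exists>\<delta>>0. \<forall>x. 0 \<le> x \<and> x < \<delta> \<longrightarrow> f x = 0"
    and a_nonneg: "a \<ge> 0"
begin

abbreviation F where "F \<equiv> Fbar p"

lemma sp: "summable p" using p_prob by (simp add: sums_iff)
lemma sump: "suminf p = 1" using p_prob by (simp add: sums_iff)

lemma Fbar_summable: "summable (\<lambda>i. if real i > x then p i else 0)"
  by (rule summable_comparison_test'[OF sp]) (auto simp: p_nonneg)

lemma Fbar_nonneg: "F x \<ge> 0"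
  unfolding Fbar_def by (rule suminf_nonneg[OF Fbar_summable]) (simp add: p_nonneg)

lemma Fbar_le1: "F x \<le> 1"
  unfolding Fbar_def using suminf_le[OF _ Fbar_summable sp, of x] p_nonneg sump by auto

lemma Fbar_mono: "x \<le> y \<Longrightarrow> F y \<le> F x"
  unfolding Fbar_def by (rule suminf_le[OF _ Fbar_summable Fbar_summable]) (auto simp: p_nonneg)

lemma Fbar_diff:
  assumes "x \<le> y"
  shows "(\<Sum>i. if x < real i \<and> real i \<le> y then p i else 0) = F x - F y"
proof -
  have "(\<lambda>i. if x < real i \<and> real i \<le> y then p i else 0) =
        (\<lambda>i. (if real i > x then p i else 0) - (if real i > y then p i else 0))"
    using assms by (auto simp: fun_eq_iff)
  then show ?thesis unfolding Fbar_def
    by (simp add: suminf_diff[OF Fbar_summable Fbar_summable])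
qed

lemma Fbar_step: "F (real n) = p (Suc n) + F (real (Suc n))"
proof -
  have "(\<Sum>i. if real n < real i \<and> real i \<le> real (Suc n) then p i else 0) = p (Suc n)"
  proof -
    have "(\<lambda>i. if real n < real i \<and> real i \<le> real (Suc n) then p i else 0) =
          (\<lambda>i. if i = Suc n then p i else 0)" by (auto simp: fun_eq_iff)
    then show ?thesis using sums_single[of "Suc n" p] by (simp add: sums_iff)
  qed
  then show ?thesis using Fbar_diff[of "real n" "real (Suc n)"] by simp
qed

lemma Fbar_neg: "x < 0 \<Longrightarrow> F x = 1"
proof -
  assume "x < 0"
  then have "(\<lambda>i. if real i > x then p i else 0) = p" by (auto simp: fun_eq_iff)
  then show ?thesis unfolding Fbar_def using sump by simp
qed

lemma l_ev_pos: "\<forall>\<^sub>F n in sequentially. l (real n) > 0"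
proof -
  have "\<forall>\<^sub>F x in at_top. l x > 0" using l_sv unfolding slowly_varying_def by blast
  then show ?thesis using filterlim_real_sequentially by (rule eventually_compose_filterlim)
qed

lemma Fbar_pos: "F x > 0"
proof -
  obtain N where N: "\<And>n. n \<ge> N \<Longrightarrow> l (real n) > 0" using l_ev_pos by (auto simp: eventually_sequentially)
  define n where "n = max N (nat \<lceil>x\<rceil>) + 1"
  have n1: "n \<ge> 1" "n \<ge> N" and nx: "real n \<ge> x" unfolding n_def by linarith+
  have "F (real n) = real n powr (-\<alpha>) * l (real n)" using tail n1 by simp
  also have "\<dots> > 0" using N[OF n1(2)] n1 by simp
  finally show ?thesis using Fbar_mono[OF nx] by simp
qed

lemma RV_int:
  assumes k: "k > (0::real)" and that: "k = real (K::nat)"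
  shows "((\<lambda>n. F (k * real n) / F (real n)) \<longlongrightarrow> k powr (-\<alpha>)) sequentially"
proof -
  have K1: "K \<ge> 1" using k that by simp
  have lim: "((\<lambda>x. l (k * x) / l x) \<longlongrightarrow> 1) at_top"
    using l_sv k unfolding slowly_varying_def by blast
  have lim2: "((\<lambda>n. l (k * real n) / l (real n)) \<longlongrightarrow> 1) sequentially"
    using filterlim_compose[OF lim filterlim_real_sequentially] by (simp add: o_def)
  have "\<forall>\<^sub>F n in sequentially. F (k * real n) / F (real n) = k powr (-\<alpha>) * (l (k * real n) / l (real n))"
    using l_ev_pos eventually_ge_at_top[of 1]
  proof eventually_elim
    case (elim n)
    have "F (k * real n) = F (real (K * n))" using that by simp
    also have "\<dots> = real (K * n) powr (-\<alpha>) * l (real (K*n))" using K1 elim by (intro tail) simp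
    also have "\<dots> = k powr (-\<alpha>) * real n powr (-\<alpha>) * l (k * real n)"
      using that by (simp add: powr_mult)
    finally have e1: "F (k * real n) = k powr (-\<alpha>) * real n powr (-\<alpha>) * l (k * real n)" .
    have e2: "F (real n) = real n powr (-\<alpha>) * l (real n)" using tail elim by simp
    show ?case unfolding e1 e2 using elim by (simp add: field_simps)
  qed
  then show ?thesis
    by (rule tendsto_cong[THEN iffD2]) (use tendsto_mult[OF tendsto_const lim2] in simp)
qed

lemma RV_int2:
  assumes "A = real (KA::nat)" "B = real (KB::nat)" "A > 0" "B > 0"
  shows "((\<lambda>n. F (A * real n) / F (B * real n)) \<longlongrightarrow> (A / B) powr (-\<alpha>)) sequentially"
proof -
  have lA: "((\<lambda>n. F (A * real n) / F (real n)) \<longlongrightarrow> A powr (-\<alpha>)) sequentially"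
    using RV_int assms by blast
  have lB: "((\<lambda>n. F (B * real n) / F (real n)) \<longlongrightarrow> B powr (-\<alpha>)) sequentially"
    using RV_int assms by blast
  have "((\<lambda>n. (F (A * real n) / F (real n)) / (F (B * real n) / F (real n))) \<longlongrightarrow> A powr (-\<alpha>) / B powr (-\<alpha>)) sequentially"
    using assms by (intro tendsto_divide lA lB) auto
  moreover have "(\<lambda>n. (F (A * real n) / F (real n)) / (F (B * real n) / F (real n))) = (\<lambda>n. F (A * real n) / F (B * real n))"
    using Fbar_pos by (auto simp: fun_eq_iff field_simps) (metis less_irrefl)
  moreover have "A powr (-\<alpha>) / B powr (-\<alpha>) = (A/B) powr (-\<alpha>)" using assms by (simp add: powr_divide)
  ultimately show ?thesis by simp
qed

end

context gwsetting begin

lemma RV_real: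
  assumes lam: "lam > 0"
  shows "((\<lambda>x. F (lam * x) / F x) \<longlongrightarrow> lam powr (-\<alpha>)) at_top"
proof (rule order_tendstoI)
  fix y assume y: "y < lam powr (-\<alpha>)"
  define A where "A = (\<lambda>b::nat. real_of_int \<lfloor>lam * real b\<rfloor> + 2)"
  have limA: "((\<lambda>b. A b / real b) \<longlongrightarrow> lam) sequentially"
  proof (rule tendsto_sandwich[of "\<lambda>b. lam + 1 / real b" _ _ "\<lambda>b. lam + 2 / real b"])
    show "\<forall>\<^sub>F b in sequentially. lam + 1 / real b \<le> A b / real b"
      using eventually_gt_at_top[of "0::nat"]
    proof eventually_elim
      case (elim b)
      have "lam * real b - 1 < real_of_int \<lfloor>lam * real b\<rfloor>" by linarith
      then have "lam * real b + 1 \<le> A b" unfolding A_def by linarith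
      then have "(lam * real b + 1) / real b \<le> A b / real b" by (rule divide_right_mono) simp
      moreover have "lam + 1 / real b = (lam * real b + 1) / real b" using elim by (simp add: field_simps)
      ultimately show ?case by simp
    qed
    show "\<forall>\<^sub>F b in sequentially. A b / real b \<le> lam + 2 / real b"
      using eventually_gt_at_top[of "0::nat"]
    proof eventually_elim
      case (elim b)
      have "real_of_int \<lfloor>lam * real b\<rfloor> \<le> lam * real b" by linarith
      then have "A b \<le> lam * real b + 2" unfolding A_def by linarith
      then have "A b / real b \<le> (lam * real b + 2) / real b" by (rule divide_right_mono) simp
      moreover have "lam + 2 / real b = (lam * real b + 2) / real b" using elim by (simp add: field_simps)
      ultimately show ?case by simp
    qed
  qed real_asymp+
  have "((\<lambda>b. (A b / real b) powr (-\<alpha>)) \<longlongrightarrow> lam powr (-\<alpha>)) sequentially"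
    using lam by (intro tendsto_powr limA tendsto_const) auto
  then have "\<forall>\<^sub>F b in sequentially. y < (A b / real b) powr (-\<alpha>)" using y by (rule order_tendstoD)
  then obtain b where yb: "y < (A b / real b) powr (-\<alpha>)" and b1: "b \<ge> 1"
    using eventually_ge_at_top[of "1::nat"] by (metis (mono_tags, lifting) eventually_at_top_linorder nle_le)
  define a where "a = \<lfloor>lam * real b\<rfloor>"
  have a0: "a \<ge> 0" using lam unfolding a_def by simp
  have Aa: "A b = real (nat (a + 2))" using a0 unfolding A_def a_def by simp
  have "((\<lambda>m. F (A b * real m) / F (real b * real m)) \<longlongrightarrow> (A b / real b) powr (-\<alpha>)) sequentially"
    using b1 a0 by (intro RV_int2[OF Aa refl]) (auto simp: A_def a_def[symmetric])
  then have "\<forall>\<^sub>F m in sequentially. y < F (A b * real m) / F (real b * real m)"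
    using yb by (rule order_tendstoD)
  then obtain M where M: "\<And>m. m \<ge> M \<Longrightarrow> y < F (A b * real m) / F (real b * real m)"
    by (auto simp: eventually_sequentially)
  show "\<forall>\<^sub>F x in at_top. y < F (lam * x) / F x"
    using eventually_ge_at_top[of "real b * (real M + real_of_int a + 2)"]
  proof eventually_elim
    case (elim x)
    define m where "m = nat \<lfloor>x / real b\<rfloor>"
    have bpos: "real b > 0" using b1 by simp
    have xb: "x / real b \<ge> real M + real_of_int a + 2" using elim bpos by (simp add: field_simps)
    have m1: "real m \<le> x / real b" "x / real b < real m + 1" using xb a0 unfolding m_def by linarith+
    have mM: "m \<ge> M" and ma: "real m \<ge> real_of_int a + 1" using xb m1 a0 by linarith+
    have x1: "real b * real m \<le> x" using m1 bpos by (simp add: field_simps)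
    have x2: "x < real b * (real m + 1)" using m1 bpos by (simp add: field_simps)
    have lb: "lam * real b < real_of_int a + 1" unfolding a_def by linarith
    have "lam * x \<le> lam * (real b * (real m + 1))" using x2 lam by simp
    also have "\<dots> = (lam * real b) * (real m + 1)" by simp
    also have "\<dots> \<le> (real_of_int a + 1) * (real m + 1)" using lb by (intro mult_right_mono) auto
    also have "\<dots> \<le> A b * real m" using ma unfolding A_def a_def[symmetric] by (simp add: algebra_simps)
    finally have "F (A b * real m) \<le> F (lam * x)" by (rule Fbar_mono)
    moreover have "F x \<le> F (real b * real m)" using x1 by (rule Fbar_mono)
    ultimately have "F (A b * real m) / F (real b * real m) \<le> F (lam * x) / F x"
      using Fbar_pos by (intro frac_le) (auto intro: less_imp_le)
    then show ?case using M[OF mM] by simp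
  qed
next
  fix y assume y: "y > lam powr (-\<alpha>)"
  define A where "A = (\<lambda>b::nat. real_of_int \<lfloor>lam * real b\<rfloor>)"
  have limA: "((\<lambda>b. A b / (real b + 1)) \<longlongrightarrow> lam) sequentially"
  proof (rule tendsto_sandwich[of "\<lambda>b. (lam * real b - 1) / (real b + 1)" _ _ "\<lambda>b. lam * real b / (real b + 1)"])
    show "\<forall>\<^sub>F b in sequentially. (lam * real b - 1) / (real b + 1) \<le> A b / (real b + 1)"
    proof (rule always_eventually, rule allI)
      fix b
      have "lam * real b - 1 \<le> real_of_int \<lfloor>lam * real b\<rfloor>" by linarith
      then show "(lam * real b - 1) / (real b + 1) \<le> A b / (real b + 1)"
        by (simp add: A_def divide_right_mono)
    qed
    show "\<forall>\<^sub>F b in sequentially. A b / (real b + 1) \<le> lam * real b / (real b + 1)"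
    proof (rule always_eventually, rule allI)
      fix b
      have "real_of_int \<lfloor>lam * real b\<rfloor> \<le> lam * real b" by linarith
      then show "A b / (real b + 1) \<le> lam * real b / (real b + 1)"
        by (simp add: A_def divide_right_mono)
    qed
  qed real_asymp+
  have "((\<lambda>b. (A b / (real b + 1)) powr (-\<alpha>)) \<longlongrightarrow> lam powr (-\<alpha>)) sequentially"
    using lam by (intro tendsto_powr limA tendsto_const) auto
  then have ev1: "\<forall>\<^sub>F b in sequentially. (A b / (real b + 1)) powr (-\<alpha>) < y" using y by (rule order_tendstoD)
  have "\<forall>\<^sub>F b in sequentially. real b \<ge> 1 / lam" by real_asymp
  then have ev2: "\<forall>\<^sub>F b in sequentially. A b \<ge> 1"
  proof eventually_elim
    case (elim b)
    then have "lam * real b \<ge> 1" using lam by (simp add: field_simps)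
    then have "1 \<le> \<lfloor>lam * real b\<rfloor>" by (simp add: le_floor_iff)
    then show ?case unfolding A_def by linarith
  qed
  obtain b where yb: "(A b / (real b + 1)) powr (-\<alpha>) < y" and A1: "A b \<ge> 1"
    using eventually_conj[OF ev1 ev2] by (auto simp: eventually_sequentially)
  define a where "a = \<lfloor>lam * real b\<rfloor>"
  have Aa: "A b = real (nat a)" using A1 unfolding A_def a_def by simp
  have "((\<lambda>m. F (A b * real m) / F ((real b + 1) * real m)) \<longlongrightarrow> (A b / (real b + 1)) powr (-\<alpha>)) sequentially"
    using A1 by (intro RV_int2[OF Aa, of _ "Suc b"]) auto
  then have "\<forall>\<^sub>F m in sequentially. F (A b * real m) / F ((real b + 1) * real m) < y"
    using yb by (rule order_tendstoD)
  then obtain M where M: "\<And>m. m \<ge> M \<Longrightarrow> F (A b * real m) / F ((real b + 1) * real m) < y"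
    by (auto simp: eventually_sequentially)
  have bpos: "real b > 0"
  proof (rule ccontr)
    assume "\<not> real b > 0" then have "b = 0" by simp
    then show False using A1 by (simp add: A_def)
  qed
  show "\<forall>\<^sub>F x in at_top. F (lam * x) / F x < y"
    using eventually_ge_at_top[of "real b * (real M + real b + 2)"]
  proof eventually_elim
    case (elim x)
    define m where "m = nat \<lfloor>x / real b\<rfloor>"
    have xb: "x / real b \<ge> real M + real b + 2" using elim bpos by (simp add: field_simps)
    have m1: "real m \<le> x / real b" "x / real b < real m + 1" using xb unfolding m_def by linarith+
    have mM: "m \<ge> M" and mb: "real m \<ge> real b + 1" using xb m1 by linarith+
    have x1: "real b * real m \<le> x" using m1 bpos by (simp add: field_simps)
    have x2: "x < real b * (real m + 1)" using m1 bpos by (simp add: field_simps)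
    have lb: "A b \<le> lam * real b" unfolding A_def by linarith
    have "A b * real m \<le> (lam * real b) * real m" using lb by (intro mult_right_mono) auto
    also have "\<dots> = lam * (real b * real m)" by simp
    also have "\<dots> \<le> lam * x" using x1 lam by simp
    finally have "F (lam * x) \<le> F (A b * real m)" by (rule Fbar_mono)
    moreover have "(real b + 1) * real m \<ge> x"
      using x2 mb by (simp add: algebra_simps)
    then have "F ((real b + 1) * real m) \<le> F x" by (rule Fbar_mono)
    ultimately have "F (lam * x) / F x \<le> F (A b * real m) / F ((real b + 1) * real m)"
      using Fbar_pos by (intro frac_le) (auto intro: less_imp_le)
    then show ?case using M[OF mM] by simp
  qed
qed

end

context gwsetting begin

lemma potter:
  "\<exists>C X \<beta>. X \<ge> 1 \<and> C > 0 \<and> \<beta> > 2 \<and> (\<forall>x. x \<ge> X \<longrightarrow> F x \<le> C * x powr (-\<beta>))"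
proof -
  define \<beta> where "\<beta> = (\<alpha> + 2) / 2"
  have b2: "\<beta> > 2" "\<beta> < \<alpha>" using alpha by (auto simp: \<beta>_def)
  have "(2::real) powr (-\<alpha>) < 2 powr (-\<beta>)" using b2 by (intro powr_less_mono) auto
  then have "\<forall>\<^sub>F x in at_top. F (2 * x) / F x < 2 powr (-\<beta>)"
    using RV_real[of 2] by (intro order_tendstoD) auto
  then obtain X0 where X0: "\<And>x. x \<ge> X0 \<Longrightarrow> F (2 * x) / F x < 2 powr (-\<beta>)"
    by (auto simp: eventually_at_top_linorder)
  define X where "X = max X0 1"
  have X1: "X \<ge> 1" by (simp add: X_def)
  have step: "F (2 * x) \<le> 2 powr (-\<beta>) * F x" if "x \<ge> X" for x
    using X0[of x] that Fbar_pos[of x] by (auto simp: X_def field_simps)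
  define C where "C = (2 * X) powr \<beta>"
  have Cpos: "C > 0" using X1 by (simp add: C_def)
  have ind: "\<forall>x. X \<le> x \<and> x < 2 ^ j * X \<longrightarrow> F x \<le> C * x powr (-\<beta>)" for j
  proof (induction j)
    case 0 then show ?case by auto
  next
    case (Suc j)
    show ?case
    proof (intro allI impI)
      fix x assume x: "X \<le> x \<and> x < 2 ^ Suc j * X"
      have xpos: "x > 0" using x X1 by auto
      show "F x \<le> C * x powr (-\<beta>)"
      proof (cases "x < 2 * X")
        case True
        have "1 \<le> (2 * X / x) powr \<beta>" using True xpos b2 by (intro ge_one_powr_ge_zero) auto
        also have "\<dots> = C * x powr (-\<beta>)"
          using xpos X1 by (simp add: C_def powr_divide powr_minus_divide)
        finally show ?thesis using Fbar_le1[of x] by linarith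
      next
        case False
        then have h: "X \<le> x / 2 \<and> x / 2 < 2 ^ j * X" using x by auto
        have "F x = F (2 * (x / 2))" by simp
        also have "\<dots> \<le> 2 powr (-\<beta>) * F (x / 2)" using h by (intro step) auto
        also have "\<dots> \<le> 2 powr (-\<beta>) * (C * (x / 2) powr (-\<beta>))"
          using Suc.IH h by (intro mult_left_mono) auto
        also have "\<dots> = C * x powr (-\<beta>)"
        proof -
          have "(x / 2) powr (-\<beta>) = x powr (-\<beta>) / 2 powr (-\<beta>)"
            using xpos by (simp add: powr_divide)
          moreover have "(2::real) powr (-\<beta>) > 0" by simp
          ultimately show ?thesis by (simp add: field_simps)
        qed
        finally show ?thesis .
      qed
    qed
  qed
  have "F x \<le> C * x powr (-\<beta>)" if "x \<ge> X" for x
  proof -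
    obtain j where "x / X < 2 ^ j" using real_arch_pow[of 2 "x / X"] by auto
    then have "x < 2 ^ j * X" using X1 by (simp add: field_simps)
    then show ?thesis using ind[of j] that by auto
  qed
  then show ?thesis using X1 Cpos b2 by blast
qed

lemma summable_moment2: "summable (\<lambda>n. real n ^ 2 * p n)"
proof -
  obtain C X \<beta> where X: "X \<ge> 1" "C > 0" "\<beta> > 2" and FC: "\<And>x. x \<ge> X \<Longrightarrow> F x \<le> C * x powr (-\<beta>)"
    using potter by auto
  have s1: "summable (\<lambda>n. 3 * C * real n powr (1 - \<beta>))"
    using X by (intro summable_mult) (simp add: summable_real_powr_iff)
  have s2: "summable (\<lambda>n. (2 * real n + 1) * F (real n))"
  proof (rule summable_comparison_test'[OF s1])
    fix n :: nat assume n: "n \<ge> nat \<lceil>X\<rceil>"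
    then have nX: "real n \<ge> X" by linarith
    then have npos: "real n > 0" using X by linarith
    have "norm ((2 * real n + 1) * F (real n)) = (2 * real n + 1) * F (real n)"
      using Fbar_nonneg by simp
    also have "\<dots> \<le> (3 * real n) * (C * real n powr (-\<beta>))"
      using FC[OF nX] Fbar_nonneg npos X
      by (intro mult_mono) (auto simp: nX)
    also have "\<dots> = 3 * C * (real n powr 1 * real n powr (-\<beta>))" using npos by simp
    also have "\<dots> = 3 * C * real n powr (1 - \<beta>)" by (simp only: powr_add[symmetric]) simp
    finally show "norm ((2 * real n + 1) * F (real n)) \<le> 3 * C * real n powr (1 - \<beta>)" .
  qed
  have id: "(\<Sum>n\<le>N. real n ^ 2 * p n) + real N ^ 2 * F (real N) = (\<Sum>n<N. (2 * real n + 1) * F (real n))" for N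
  proof (induction N)
    case 0 then show ?case by simp
  next
    case (Suc N)
    have "(\<Sum>n\<le>Suc N. real n ^ 2 * p n) + real (Suc N) ^ 2 * F (real (Suc N))
        = ((\<Sum>n\<le>N. real n ^ 2 * p n) + real N ^ 2 * F (real N))
          + (real (Suc N) ^ 2 * (p (Suc N) + F (real (Suc N))) - real N ^ 2 * F (real N))"
      by (simp add: algebra_simps)
    also have "p (Suc N) + F (real (Suc N)) = F (real N)" using Fbar_step[of N] by simp
    finally show ?case using Suc.IH by (simp add: algebra_simps power2_eq_square)
  qed
  show ?thesis
  proof (rule bounded_imp_summable)
    show "0 \<le> real n ^ 2 * p n" for n using p_nonneg by simp
    fix N
    have "(\<Sum>n\<le>N. real n ^ 2 * p n) \<le> (\<Sum>n<N. (2 * real n + 1) * F (real n))"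
    proof -
      have "real N ^ 2 * F (real N) \<ge> 0" using Fbar_nonneg by simp
      then show ?thesis using id[of N] by linarith
    qed
    also have "\<dots> \<le> (\<Sum>n. (2 * real n + 1) * F (real n))"
      using s2 Fbar_nonneg by (intro sum_le_suminf) auto
    finally show "(\<Sum>n\<le>N. real n ^ 2 * p n) \<le> (\<Sum>n. (2 * real n + 1) * F (real n))" .
  qed
qed

lemma x2F_lim: "((\<lambda>x. x ^ 2 * F x) \<longlongrightarrow> 0) at_top"
proof -
  have T: "((\<lambda>x. \<Sum>i. (if real i > x then real i ^ 2 * p i else 0)) \<longlongrightarrow> (\<Sum>i. (0::real))) at_top"
  proof (rule tannerys_theorem[THEN conjunct2, THEN conjunct2])
    show "((\<lambda>x. if real i > x then real i ^ 2 * p i else 0) \<longlongrightarrow> 0) at_top" for i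
    proof (rule tendsto_eventually)
      show "\<forall>\<^sub>F x in at_top. (if real i > x then real i ^ 2 * p i else 0) = 0"
        using eventually_ge_at_top[of "real i"] by eventually_elim auto
    qed
    show "\<forall>\<^sub>F (k, x) in at_top \<times>\<^sub>F at_top. norm (if real k > x then real k ^ 2 * p k else 0) \<le> real k ^ 2 * p k"
      by (intro always_eventually) (auto simp: p_nonneg)
  qed (use summable_moment2 in auto)
  show ?thesis
  proof (rule tendsto_sandwich[OF _ _ tendsto_const T[simplified]])
    show "\<forall>\<^sub>F x in at_top. 0 \<le> x ^ 2 * F x" using Fbar_nonneg by simp
    show "\<forall>\<^sub>F x in at_top. x ^ 2 * F x \<le> (\<Sum>i. if x < real i then real i ^ 2 * p i else 0)"
      using eventually_ge_at_top[of "0::real"]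
    proof eventually_elim
      case (elim x)
      have sm: "summable (\<lambda>i. if x < real i then real i ^ 2 * p i else 0)"
        by (rule summable_comparison_test'[OF summable_moment2]) (auto simp: p_nonneg)
      have "x ^ 2 * F x = (\<Sum>i. x ^ 2 * (if real i > x then p i else 0))"
        unfolding Fbar_def using Fbar_summable by (intro suminf_mult[symmetric])
      also have "\<dots> \<le> (\<Sum>i. if x < real i then real i ^ 2 * p i else 0)"
      proof (rule suminf_le[OF _ summable_mult[OF Fbar_summable] sm])
        fix i
        show "x ^ 2 * (if real i > x then p i else 0) \<le> (if x < real i then real i ^ 2 * p i else 0)"
          using elim p_nonneg[of i] by (auto intro!: mult_right_mono power_mono)
      qed
      finally show ?case .
    qed
  qed
qed

end

fun dd :: "nat \<Rightarrow> real \<Rightarrow> real" where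
  "dd 0 x = 0"
| "dd (Suc n) x = (1 - x) * dd n x + real n"

lemma dd_id: "(1 - x) ^ n - 1 + real n * x = x ^ 2 * dd n x"
proof (induction n)
  case (Suc n)
  have "(1 - x) ^ Suc n - 1 + real (Suc n) * x = (1 - x) * ((1 - x) ^ n - 1 + real n * x) + real n * x ^ 2"
    by (simp add: algebra_simps power2_eq_square)
  also have "\<dots> = x ^ 2 * dd (Suc n) x" using Suc by (simp add: algebra_simps)
  finally show ?case .
qed simp

lemma dd_0: "dd n 0 = real n * (real n - 1) / 2"
  by (induction n) (auto simp: field_simps)

lemma dd_bounds: "0 \<le> x \<Longrightarrow> x \<le> 1 \<Longrightarrow> 0 \<le> dd n x \<and> dd n x \<le> dd n 0"
proof (induction n)
  case (Suc n)
  then have "(1 - x) * dd n x \<le> dd n x" by (simp add: mult_left_le_one_le)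
  then show ?case using Suc by auto
qed simp

lemma dd_ge1: "0 \<le> x \<Longrightarrow> x \<le> 1 \<Longrightarrow> n \<ge> 2 \<Longrightarrow> dd n x \<ge> 1"
proof -
  assume x: "0 \<le> x" "x \<le> 1" and n: "n \<ge> 2"
  obtain m where m: "n = Suc m" "m \<ge> 1" using n by (cases n) auto
  have "(1 - x) * dd m x \<ge> 0" using dd_bounds[OF x, of m] x by simp
  then show ?thesis using m by simp
qed

lemma dd_le: "0 \<le> x \<Longrightarrow> x \<le> 1 \<Longrightarrow> dd n x \<le> real n ^ 2"
proof -
  assume x: "0 \<le> x" "x \<le> 1"
  have "dd n x \<le> dd n 0" using dd_bounds[OF x] by simp
  also have "\<dots> \<le> real n ^ 2" unfolding dd_0 by (simp add: power2_eq_square field_simps)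
  finally show ?thesis .
qed

lemma dd_cont: "isCont (dd n) x"
  by (induction n) (auto intro!: continuous_intros)

context gwsetting begin

definition RR :: "real \<Rightarrow> real" where "RR x = (\<Sum>n. p n * dd n x)"
definition s2 :: real where "s2 = (\<Sum>n. real n ^ 2 * p n) - 1"

lemma R_summable: "0 \<le> x \<Longrightarrow> x \<le> 1 \<Longrightarrow> summable (\<lambda>n. p n * dd n x)"
  by (rule summable_comparison_test'[OF summable_moment2])
     (use dd_bounds dd_le p_nonneg in \<open>auto simp: mult.commute intro!: mult_left_mono\<close>)

lemma sums_crit: "summable (\<lambda>n. real n * p n)" "(\<Sum>n. real n * p n) = 1"
  using p_crit by (auto simp: sums_iff)

lemma R0: "RR 0 = s2 / 2"
proof -
  have "RR 0 = (\<Sum>n. (real n ^ 2 * p n - real n * p n) / 2)"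
    unfolding RR_def dd_0 by (intro suminf_cong) (simp add: field_simps power2_eq_square)
  also have "\<dots> = (\<Sum>n. real n ^ 2 * p n - real n * p n) / 2"
    by (intro suminf_divide summable_diff summable_moment2 sums_crit)
  also have "\<dots> = ((\<Sum>n. real n ^ 2 * p n) - (\<Sum>n. real n * p n)) / 2"
    by (subst suminf_diff) (auto intro: summable_moment2 sums_crit)
  finally show ?thesis unfolding s2_def sums_crit by simp
qed

lemma R_id:
  assumes x: "0 \<le> x" "x \<le> 1"
  shows "(\<Sum>n. p n * (1 - x) ^ n) - 1 + x = x ^ 2 * RR x"
proof -
  have sg: "summable (\<lambda>n. p n * (1 - x) ^ n)"
    by (rule summable_comparison_test'[OF sp]) (use x p_nonneg in \<open>auto intro!: mult_left_le power_le_one\<close>)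
  have sx: "summable (\<lambda>n. x * (real n * p n))" by (intro summable_mult sums_crit)
  have "(\<Sum>n. p n * (1 - x) ^ n) - 1 + x = (\<Sum>n. p n * (1 - x) ^ n) - (\<Sum>n. p n) + (\<Sum>n. x * (real n * p n))"
    using sump sums_crit by (simp add: suminf_mult)
  also have "\<dots> = (\<Sum>n. p n * (1 - x) ^ n - p n + x * (real n * p n))"
    using sg sp sx by (simp add: suminf_diff suminf_add summable_diff)
  also have "\<dots> = (\<Sum>n. x ^ 2 * (p n * dd n x))"
  proof (intro suminf_cong)
    fix n
    have "p n * (1 - x) ^ n - p n + x * (real n * p n) = p n * ((1 - x) ^ n - 1 + real n * x)"
      by (simp add: algebra_simps)
    also have "\<dots> = x ^ 2 * (p n * dd n x)" by (simp add: dd_id)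
    finally show "p n * (1 - x) ^ n - p n + x * (real n * p n) = x ^ 2 * (p n * dd n x)" .
  qed
  also have "\<dots> = x ^ 2 * RR x" unfolding RR_def using R_summable[OF x] by (simp add: suminf_mult)
  finally show ?thesis .
qed

lemma R_lim: "(RR \<longlongrightarrow> s2 / 2) (at_right 0)"
proof -
  have "((\<lambda>x. \<Sum>n. p n * dd n x) \<longlongrightarrow> (\<Sum>n. p n * dd n 0)) (at_right 0)"
  proof (rule tannerys_theorem[THEN conjunct2, THEN conjunct2])
    show "((\<lambda>x. p n * dd n x) \<longlongrightarrow> p n * dd n 0) (at_right 0)" for n
    proof -
      have "(dd n \<longlongrightarrow> dd n 0) (at_right 0)"
        using dd_cont[of 0 n] unfolding isCont_def by (rule tendsto_mono[OF at_le[OF subset_UNIV], rotated])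
      then show ?thesis by (intro tendsto_mult tendsto_const)
    qed
    have ev: "\<forall>\<^sub>F x in at_right (0::real). 0 \<le> x \<and> x \<le> 1"
      unfolding eventually_at_right_field by (rule exI[of _ 1]) auto
    have b: "norm (p n * dd n x) \<le> real n ^ 2 * p n" if "0 \<le> x" "x \<le> 1" for n x
    proof -
      have "0 \<le> dd n x" "dd n x \<le> real n ^ 2" using dd_bounds[OF that] dd_le[OF that] by auto
      then show ?thesis using p_nonneg[of n] by (simp add: abs_mult mult.commute mult_left_mono)
    qed
    show "\<forall>\<^sub>F (n, x) in at_top \<times>\<^sub>F at_right 0. norm (p n * dd n x) \<le> real n ^ 2 * p n"
      using eventually_prodI[OF always_eventually[of "\<lambda>_::nat. True"] ev]
      by (rule eventually_mono) (use b in \<open>auto simp: case_prod_unfold\<close>)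
  qed (use summable_moment2 in auto)
  then show ?thesis using R0 unfolding RR_def by simp
qed

lemma R_cont: "continuous (at 0 within {0..}) RR"
  unfolding continuous_within at_within_Ici_at_right by (simp only: R0) (rule R_lim)

lemma exists_big: "\<exists>n0\<ge>2. p n0 > 0"
proof (rule ccontr)
  assume "\<not> (\<exists>n0\<ge>2. p n0 > 0)"
  then have z: "p n = 0" if "n \<ge> 2" for n
  proof -
    have "\<not> p n > 0" using that \<open>\<not> (\<exists>n0\<ge>2. p n0 > 0)\<close> by blast
    then show ?thesis using p_nonneg[of n] by simp
  qed
  have "(\<lambda>n. real n * p n) = (\<lambda>n. if n = 1 then p 1 else 0)"
  proof
    fix n show "real n * p n = (if n = 1 then p 1 else 0)"
      using z[of n] by (cases "n = 0"; cases "n = 1") auto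
  qed
  then have "(\<lambda>n. real n * p n) sums p 1" using sums_single[of 1 "\<lambda>_. p 1"] by simp
  then have "p 1 = 1" using p_crit sums_unique2 by blast
  then show False using p_nondeg by simp
qed

lemma R_lower: "\<exists>c>0. \<forall>x. 0 \<le> x \<and> x \<le> 1 \<longrightarrow> RR x \<ge> c"
proof -
  obtain n0 where n0: "n0 \<ge> 2" "p n0 > 0" using exists_big by blast
  have "RR x \<ge> p n0" if x: "0 \<le> x" "x \<le> 1" for x
  proof -
    have "p n0 \<le> p n0 * dd n0 x" using dd_ge1[OF x n0(1)] n0 by simp
    also have "\<dots> = (\<Sum>n\<in>{n0}. p n * dd n x)" by simp
    also have "\<dots> \<le> RR x" unfolding RR_def
      by (rule sum_le_suminf[OF R_summable[OF x]]) (use x dd_bounds p_nonneg in auto)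
    finally show ?thesis .
  qed
  then show ?thesis using n0 by blast
qed

lemma s2_pos: "s2 > 0"
proof -
  obtain c where c: "c > 0" "\<And>x. 0 \<le> x \<and> x \<le> 1 \<Longrightarrow> RR x \<ge> c" using R_lower by blast
  have "RR 0 \<ge> c" using c(2)[of 0] by simp
  then show ?thesis using R0 c(1) by simp
qed

end

lemma step_approx:
  fixes h :: "real \<Rightarrow> real"
  assumes y0: "y0 > 0" and w: "w > 0" and e: "e \<ge> 0" and M: "M = y0 + real m * w"
    and uc: "\<And>x x'. 0 \<le> x \<Longrightarrow> x \<le> M \<Longrightarrow> 0 \<le> x' \<Longrightarrow> x' \<le> M \<Longrightarrow> \<bar>x - x'\<bar> \<le> w \<Longrightarrow> \<bar>h x - h x'\<bar> \<le> e"
    and z: "\<And>x. 0 \<le> x \<Longrightarrow> x \<le> y0 \<Longrightarrow> h x = 0"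
    and h1: "\<And>x. 0 \<le> x \<Longrightarrow> \<bar>h x\<bar> \<le> 1"
    and t: "t \<ge> 0"
  shows "\<bar>h t - (\<Sum>j=1..m. h (y0 + real j * w) * indicator {y0 + (real j - 1) * w <.. y0 + real j * w} t)\<bar>
           \<le> e * indicator {y0<..} t + indicator {M<..} t"
proof -
  consider "t \<le> y0" | "t > M" | "y0 < t \<and> t \<le> M" by linarith
  then show ?thesis
  proof cases
    case 1
    have "(\<Sum>j=1..m. h (y0 + real j * w) * indicator {y0 + (real j - 1) * w <.. y0 + real j * w} t) = 0"
    proof (intro sum.neutral ballI)
      fix j assume "j \<in> {1..m}"
      then have "real j - 1 \<ge> 0" by simp
      then have "(real j - 1) * w \<ge> 0" using w by simp
      then have "y0 + (real j - 1) * w \<ge> t" using 1 by simp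
      then show "h (y0 + real j * w) * indicator {y0 + (real j - 1) * w <.. y0 + real j * w} t = 0" by simp
    qed
    moreover have "h t = 0" using z t 1 by simp
    moreover have "e * indicator {y0<..} t + indicator {M<..} t \<ge> (0::real)" using e by simp
    ultimately show ?thesis by simp
  next
    case 2
    have "(\<Sum>j=1..m. h (y0 + real j * w) * indicator {y0 + (real j - 1) * w <.. y0 + real j * w} t) = 0"
    proof (intro sum.neutral ballI)
      fix j assume "j \<in> {1..m}"
      then have "y0 + real j * w \<le> M" using M w by simp
      then show "h (y0 + real j * w) * indicator {y0 + (real j - 1) * w <.. y0 + real j * w} t = 0" using 2 by simp
    qed
    moreover have "M \<ge> y0" using M w by simp
    ultimately show ?thesis using 2 h1[OF t] e by simp
  next
    case 3
    define r where "r = (t - y0) / w"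
    have r: "0 < r" "r \<le> real m" using 3 w M unfolding r_def by (auto simp: field_simps)
    define j0 where "j0 = nat \<lceil>r\<rceil>"
    have j0: "real j0 - 1 < r" "r \<le> real j0" using r unfolding j0_def by linarith+
    have j0m: "j0 \<in> {1..m}" using r j0 unfolding j0_def by (auto simp: le_nat_iff ceiling_le_iff)
    have ind: "indicator {y0 + (real j - 1) * w <.. y0 + real j * w} t = (if j = j0 then 1 else (0::real))" for j
    proof -
      have "t \<in> {y0 + (real j - 1) * w <.. y0 + real j * w} \<longleftrightarrow> real j - 1 < r \<and> r \<le> real j"
        using w unfolding r_def by (auto simp: field_simps)
      also have "\<dots> \<longleftrightarrow> j = j0"
      proof
        assume a: "real j - 1 < r \<and> r \<le> real j"
        then have "\<lceil>r\<rceil> = int j" by (simp add: ceiling_eq_iff)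
        then show "j = j0" unfolding j0_def by simp
      next
        assume "j = j0" then show "real j - 1 < r \<and> r \<le> real j" using j0 by simp
      qed
      finally show ?thesis by (simp add: indicator_def)
    qed
    have "(\<Sum>j=1..m. h (y0 + real j * w) * indicator {y0 + (real j - 1) * w <.. y0 + real j * w} t)
          = (\<Sum>j=1..m. if j = j0 then h (y0 + real j * w) else 0)"
      by (intro sum.cong refl) (simp add: ind)
    also have "\<dots> = h (y0 + real j0 * w)" using j0m by simp
    finally have s: "(\<Sum>j=1..m. h (y0 + real j * w) * indicator {y0 + (real j - 1) * w <.. y0 + real j * w} t) = h (y0 + real j0 * w)" .
    have d: "\<bar>t - (y0 + real j0 * w)\<bar> \<le> w"
    proof -
      have "t = y0 + r * w" using w unfolding r_def by simp
      moreover have "\<bar>r - real j0\<bar> \<le> 1" using j0 by simp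
      moreover have "r * w - real j0 * w = (r - real j0) * w" by (simp add: algebra_simps)
      ultimately have "\<bar>t - (y0 + real j0 * w)\<bar> = \<bar>r - real j0\<bar> * w" using w by (simp add: abs_mult)
      also have "\<dots> \<le> 1 * w" using j0 w by (intro mult_right_mono) auto
      finally show ?thesis by simp
    qed
    have "y0 + real j0 * w \<le> M" using j0m M w by simp
    then have "\<bar>h t - h (y0 + real j0 * w)\<bar> \<le> e"
      using 3 y0 w d by (intro uc) auto
    then show ?thesis using s 3 by simp
  qed
qed

lemma powr_tail_integral:
  fixes a \<alpha> :: real assumes a: "a > 0" and al: "\<alpha> > 0"
  shows "integrable lborel (\<lambda>x. indicator {a<..} x * x powr (-\<alpha>-1))"
    and "(\<integral>x. indicator {a<..} x * x powr (-\<alpha>-1) \<partial>lborel) = a powr (-\<alpha>) / \<alpha>"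
proof -
  have h1: "((\<lambda>x. x powr (-\<alpha>-1)) has_integral -(a powr (-\<alpha>-1+1)) / (-\<alpha>-1+1)) {a..}"
    by (rule has_integral_powr_to_inf) (use a al in auto)
  have e: "-(a powr (-\<alpha>-1+1)) / (-\<alpha>-1+1) = a powr (-\<alpha>) / \<alpha>" by simp
  have h2: "((\<lambda>x. x powr (-\<alpha>-1)) has_integral a powr (-\<alpha>) / \<alpha>) {a<..}"
  proof -
    have "negligible {a}" by simp
    then have "((\<lambda>x. x powr (-\<alpha>-1)) has_integral (a powr (-\<alpha>) / \<alpha>)) {a..} \<longleftrightarrow> ((\<lambda>x. x powr (-\<alpha>-1)) has_integral (a powr (-\<alpha>) / \<alpha>)) {a<..}"
      by (intro has_integral_spike_set_eq) (auto intro: negligible_subset)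
    then show ?thesis using h1 unfolding e by simp
  qed
  have ai: "(\<lambda>x. x powr (-\<alpha>-1)) absolutely_integrable_on {a<..}"
    using h2 by (intro nonnegative_absolutely_integrable_1) (auto simp: integrable_on_def)
  have meas: "(\<lambda>x. indicator {a<..} x *\<^sub>R x powr (-\<alpha>-1)) \<in> borel_measurable lborel"
    by measurable
  have si: "set_integrable lborel {a<..} (\<lambda>x. x powr (-\<alpha>-1))"
    using ai meas unfolding set_integrable_def
    using integrable_completion[OF meas] by simp
  then show "integrable lborel (\<lambda>x. indicator {a<..} x * x powr (-\<alpha>-1))"
    unfolding set_integrable_def by simp
  show "(\<integral>x. indicator {a<..} x * x powr (-\<alpha>-1) \<partial>lborel) = a powr (-\<alpha>) / \<alpha>"
    using set_borel_integral_eq_integral(2)[OF si] h2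
    by (simp add: integral_unique set_lebesgue_integral_def)
qed

lemma integral_side:
  fixes h :: "real \<Rightarrow> real"
  assumes al: "\<alpha> > 0"
    and y0: "y0 > 0" and w: "w > 0" and e: "e \<ge> 0" and M: "M = y0 + real m * w"
    and uc: "\<And>x x'. 0 \<le> x \<Longrightarrow> x \<le> M \<Longrightarrow> 0 \<le> x' \<Longrightarrow> x' \<le> M \<Longrightarrow> \<bar>x - x'\<bar> \<le> w \<Longrightarrow> \<bar>h x - h x'\<bar> \<le> e"
    and z: "\<And>x. 0 \<le> x \<Longrightarrow> x \<le> y0 \<Longrightarrow> h x = 0"
    and h1: "\<And>x. 0 \<le> x \<Longrightarrow> \<bar>h x\<bar> \<le> 1"
    and hc: "continuous_on {0<..} h"
  shows "set_integrable lborel {0<..} (\<lambda>x. h x * x powr (-\<alpha>-1))"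
    and "\<bar>\<alpha> * (LBINT x:{0<..}. h x * x powr (-\<alpha>-1))
          - (\<Sum>j=1..m. h (y0 + real j * w) * ((y0 + (real j - 1) * w) powr (-\<alpha>) - (y0 + real j * w) powr (-\<alpha>)))\<bar>
         \<le> e * y0 powr (-\<alpha>) + M powr (-\<alpha>)"
proof -
  define G where "G = (\<lambda>a x. indicator {a<..} x * (x::real) powr (-\<alpha>-1))"
  define H where "H = (\<lambda>x. indicator {0<..} x * (h x * x powr (-\<alpha>-1)))"
  define yy where "yy = (\<lambda>j::nat. y0 + real j * w)"
  have yyp: "yy j \<ge> y0" for j using w by (simp add: yy_def)
  have yym: "y0 + (real j - 1) * w = yy (j - 1)" if "j \<ge> 1" for j
    using that by (simp add: yy_def of_nat_diff algebra_simps)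
  have Gi: "integrable lborel (G a)" if "a > 0" for a
    unfolding G_def using powr_tail_integral(1)[OF that al] .
  have Gv: "integral\<^sup>L lborel (G a) = a powr (-\<alpha>) / \<alpha>" if "a > 0" for a
    unfolding G_def using powr_tail_integral(2)[OF that al] .
  have Hm: "H \<in> borel_measurable lborel"
  proof -
    have "continuous_on {0<..} (\<lambda>x. h x * x powr (-\<alpha>-1))"
      using hc by (intro continuous_intros) auto
    then have "(\<lambda>x. indicator {0<..} x *\<^sub>R (h x * x powr (-\<alpha>-1))) \<in> borel_measurable borel"
      by (intro borel_measurable_continuous_on_indicator) auto
    then show ?thesis unfolding H_def by simp
  qed
  have Hb: "\<bar>H x\<bar> \<le> G y0 x" for x
  proof (cases "x > y0")
    case True
    then have "\<bar>h x\<bar> \<le> 1" using h1 y0 by simp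
    then have "\<bar>h x\<bar> * x powr (-\<alpha>-1) \<le> 1 * x powr (-\<alpha>-1)" by (intro mult_right_mono) auto
    then show ?thesis using True y0 by (simp add: H_def G_def abs_mult)
  next
    case False
    then show ?thesis using z[of x] by (auto simp: H_def G_def indicator_def)
  qed
  have Hi: "integrable lborel H"
    by (rule Bochner_Integration.integrable_bound[OF Gi[OF y0] Hm]) (use Hb in \<open>auto simp: G_def\<close>)
  show "set_integrable lborel {0<..} (\<lambda>x. h x * x powr (-\<alpha>-1))"
    using Hi unfolding set_integrable_def H_def by simp
  have I: "(LBINT x:{0<..}. h x * x powr (-\<alpha>-1)) = integral\<^sup>L lborel H"
    unfolding set_lebesgue_integral_def H_def by simp
  define S where "S = (\<lambda>x. \<Sum>j=1..m. h (yy j) * (G (yy (j - 1)) x - G (yy j) x))"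
  have Si: "integrable lborel S"
    unfolding S_def using Gi yyp y0 by (intro Bochner_Integration.integrable_sum integrable_mult_right Bochner_Integration.integrable_diff) (auto intro: less_le_trans)
  have Sv: "integral\<^sup>L lborel S = (\<Sum>j=1..m. h (yy j) * ((yy (j - 1)) powr (-\<alpha>) - (yy j) powr (-\<alpha>))) / \<alpha>"
  proof -
    have ip: "integrable lborel (G (yy j))" for j using Gi[of "yy j"] yyp[of j] y0 by simp
    have "integral\<^sup>L lborel S = (\<Sum>j=1..m. integral\<^sup>L lborel (\<lambda>x. h (yy j) * (G (yy (j - 1)) x - G (yy j) x)))"
      unfolding S_def using ip
      by (intro Bochner_Integration.integral_sum integrable_mult_right Bochner_Integration.integrable_diff) auto
    also have "\<dots> = (\<Sum>j=1..m. h (yy j) * (integral\<^sup>L lborel (G (yy (j - 1))) - integral\<^sup>L lborel (G (yy j))))"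
      using ip by (intro sum.cong refl) (simp add: Bochner_Integration.integral_diff)
    also have "\<dots> = (\<Sum>j=1..m. h (yy j) * ((yy (j - 1)) powr (-\<alpha>) - (yy j) powr (-\<alpha>)) / \<alpha>)"
      using Gv yyp y0 al by (intro sum.cong refl) (simp add: less_le_trans[OF y0] diff_divide_distrib[symmetric])
    finally show ?thesis by (simp add: sum_divide_distrib)
  qed
  have pw: "\<bar>H x - S x\<bar> \<le> e * G y0 x + G M x" for x
  proof (cases "x > 0")
    case False
    have "G a x = 0" if "a > 0" for a using False that by (simp add: G_def)
    moreover have "yy j > 0" for j using yyp[of j] y0 by linarith
    moreover have "M > 0" using M y0 w by (smt (verit) mult_nonneg_nonneg of_nat_0_le_iff)
    ultimately have "S x = 0" "G y0 x = 0" "G M x = 0" "H x = 0" using False y0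
      by (auto simp: S_def H_def)
    then show ?thesis by simp
  next
    case True
    have indj: "indicator {yy (j-1)<..} x - indicator {yy j<..} x = (indicator {y0 + (real j - 1) * w <.. y0 + real j * w} x :: real)"
      if "j \<ge> 1" for j
      using that w unfolding yym[OF that, symmetric] by (auto simp: indicator_def yy_def algebra_simps)
    have "S x = (\<Sum>j=1..m. h (yy j) * indicator {y0 + (real j - 1) * w <.. y0 + real j * w} x) * x powr (-\<alpha>-1)"
      unfolding S_def sum_distrib_right
    proof (intro sum.cong refl)
      fix j assume j: "j \<in> {1..m}"
      have "G (yy (j-1)) x - G (yy j) x = (indicator {yy (j-1)<..} x - indicator {yy j<..} x) * x powr (-\<alpha>-1)"
        by (simp add: G_def algebra_simps)
      also have "\<dots> = indicator {y0 + (real j - 1) * w <.. y0 + real j * w} x * x powr (-\<alpha>-1)"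
        using indj[of j] j by simp
      finally show "h (yy j) * (G (yy (j - 1)) x - G (yy j) x) = h (yy j) * indicator {y0 + (real j - 1) * w <.. y0 + real j * w} x * x powr (-\<alpha>-1)"
        by simp
    qed
    then have "H x - S x = (h x - (\<Sum>j=1..m. h (y0 + real j * w) * indicator {y0 + (real j - 1) * w <.. y0 + real j * w} x)) * x powr (-\<alpha>-1)"
      using True by (simp add: H_def yy_def algebra_simps)
    also have "\<bar>\<dots>\<bar> \<le> (e * indicator {y0<..} x + indicator {M<..} x) * x powr (-\<alpha>-1)"
      unfolding abs_mult using True
      by (simp only: abs_of_nonneg[OF powr_ge_zero]) (intro mult_right_mono step_approx[OF y0 w e M uc z h1], auto)
    also have "\<dots> = e * G y0 x + G M x" by (simp add: G_def algebra_simps)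
    finally show ?thesis .
  qed
  have Mpos: "M > 0" using M y0 w by (smt (verit) mult_nonneg_nonneg of_nat_0_le_iff)
  have "\<bar>integral\<^sup>L lborel H - integral\<^sup>L lborel S\<bar> = \<bar>integral\<^sup>L lborel (\<lambda>x. H x - S x)\<bar>"
    using Hi Si by simp
  also have "\<dots> \<le> integral\<^sup>L lborel (\<lambda>x. e * G y0 x + G M x)"
    by (rule integral_abs_bound_integral) (use Hi Si Gi y0 Mpos pw in auto)
  also have "\<dots> = e * (y0 powr (-\<alpha>) / \<alpha>) + M powr (-\<alpha>) / \<alpha>"
    using Gi Gv y0 Mpos by simp
  finally have fin: "\<bar>integral\<^sup>L lborel H - integral\<^sup>L lborel S\<bar> \<le> e * (y0 powr (-\<alpha>) / \<alpha>) + M powr (-\<alpha>) / \<alpha>" .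
  have "\<bar>\<alpha> * integral\<^sup>L lborel H - \<alpha> * integral\<^sup>L lborel S\<bar> = \<alpha> * \<bar>integral\<^sup>L lborel H - integral\<^sup>L lborel S\<bar>"
    using al by (simp add: abs_mult right_diff_distrib[symmetric])
  also have "\<dots> \<le> \<alpha> * (e * (y0 powr (-\<alpha>) / \<alpha>) + M powr (-\<alpha>) / \<alpha>)"
    using fin al by (intro mult_left_mono) auto
  also have "\<dots> = e * y0 powr (-\<alpha>) + M powr (-\<alpha>)" using al by (simp add: field_simps)
  finally have "\<bar>\<alpha> * integral\<^sup>L lborel H - \<alpha> * integral\<^sup>L lborel S\<bar> \<le> e * y0 powr (-\<alpha>) + M powr (-\<alpha>)" .
  moreover have "\<alpha> * integral\<^sup>L lborel S = (\<Sum>j=1..m. h (y0 + real j * w) * ((y0 + (real j - 1) * w) powr (-\<alpha>) - (y0 + real j * w) powr (-\<alpha>)))"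
    unfolding Sv using al by (simp add: yy_def)
  ultimately show "\<bar>\<alpha> * (LBINT x:{0<..}. h x * x powr (-\<alpha>-1))
          - (\<Sum>j=1..m. h (y0 + real j * w) * ((y0 + (real j - 1) * w) powr (-\<alpha>) - (y0 + real j * w) powr (-\<alpha>)))\<bar>
         \<le> e * y0 powr (-\<alpha>) + M powr (-\<alpha>)" unfolding I by simp
qed

context gwsetting begin

lemma ind_div:
  assumes "\<psi> > 0"
  shows "p n * indicator {u<..v} (real n / \<psi>) = (if \<psi> * u < real n \<and> real n \<le> \<psi> * v then p n else 0)"
    and "p n * indicator {u<..} (real n / \<psi>) = (if real n > \<psi> * u then p n else 0)"
  using assms by (auto simp: indicator_def field_simps)

lemma sum_side:
  fixes h :: "real \<Rightarrow> real"
  assumes psi: "\<psi> > 0"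
    and y0: "y0 > 0" and w: "w > 0" and e: "e \<ge> 0" and M: "M = y0 + real m * w"
    and uc: "\<And>x x'. 0 \<le> x \<Longrightarrow> x \<le> M \<Longrightarrow> 0 \<le> x' \<Longrightarrow> x' \<le> M \<Longrightarrow> \<bar>x - x'\<bar> \<le> w \<Longrightarrow> \<bar>h x - h x'\<bar> \<le> e"
    and z: "\<And>x. 0 \<le> x \<Longrightarrow> x \<le> y0 \<Longrightarrow> h x = 0"
    and h1: "\<And>x. 0 \<le> x \<Longrightarrow> \<bar>h x\<bar> \<le> 1"
  shows "\<bar>(\<Sum>n. p n * h (real n / \<psi>))
          - (\<Sum>j=1..m. h (y0 + real j * w) * (F (\<psi> * (y0 + (real j - 1) * w)) - F (\<psi> * (y0 + real j * w))))\<bar>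
         \<le> e * F (\<psi> * y0) + F (\<psi> * M)"
proof -
  define aa where "aa = (\<lambda>j::nat. y0 + (real j - 1) * w)"
  define b where "b = (\<lambda>j::nat. y0 + real j * w)"
  define \<sigma> where "\<sigma> = (\<lambda>t. \<Sum>j=1..m. h (b j) * indicator {aa j<..b j} t)"
  have ab: "aa j \<le> b j" for j using w by (simp add: aa_def b_def)
  have sh: "summable (\<lambda>n. p n * h (real n / \<psi>))"
    by (rule summable_comparison_test'[OF sp]) (use h1 psi p_nonneg in \<open>auto simp: abs_mult intro!: mult_left_le\<close>)
  have sj: "summable (\<lambda>n. h (b j) * (p n * indicator {aa j<..b j} (real n / \<psi>)))" for j
    by (intro summable_mult summable_comparison_test'[OF sp]) (auto simp: p_nonneg indicator_def)
  have eqs: "(\<lambda>n. p n * \<sigma> (real n / \<psi>)) = (\<lambda>n. \<Sum>j=1..m. h (b j) * (p n * indicator {aa j<..b j} (real n / \<psi>)))"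
    unfolding \<sigma>_def sum_distrib_left by (intro ext sum.cong refl) (simp only: mult_ac)
  have ssig: "summable (\<lambda>n. p n * \<sigma> (real n / \<psi>))"
    unfolding eqs using sj by (intro summable_sum) auto
  have Bsum: "(\<Sum>n. p n * \<sigma> (real n / \<psi>)) = (\<Sum>j=1..m. h (b j) * (F (\<psi> * aa j) - F (\<psi> * b j)))"
  proof -
    have "(\<Sum>n. p n * \<sigma> (real n / \<psi>)) = (\<Sum>n. \<Sum>j=1..m. h (b j) * (p n * indicator {aa j<..b j} (real n / \<psi>)))"
      unfolding eqs ..
    also have "\<dots> = (\<Sum>j=1..m. \<Sum>n. h (b j) * (p n * indicator {aa j<..b j} (real n / \<psi>)))"
      using sj by (intro suminf_sum) auto
    also have "\<dots> = (\<Sum>j=1..m. h (b j) * (F (\<psi> * aa j) - F (\<psi> * b j)))"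
    proof (intro sum.cong refl)
      fix j
      have "(\<Sum>n. h (b j) * (p n * indicator {aa j<..b j} (real n / \<psi>)))
          = h (b j) * (\<Sum>n. p n * indicator {aa j<..b j} (real n / \<psi>))"
        by (intro suminf_mult summable_comparison_test'[OF sp]) (auto simp: p_nonneg indicator_def)
      also have "(\<Sum>n. p n * indicator {aa j<..b j} (real n / \<psi>)) = F (\<psi> * aa j) - F (\<psi> * b j)"
        unfolding ind_div(1)[OF psi] using ab psi by (intro Fbar_diff) (simp add: mult_left_mono)
      finally show "(\<Sum>n. h (b j) * (p n * indicator {aa j<..b j} (real n / \<psi>))) = h (b j) * (F (\<psi> * aa j) - F (\<psi> * b j))" .
    qed
    finally show ?thesis .
  qed
  define g where "g = (\<lambda>n. e * (p n * indicator {y0<..} (real n / \<psi>)) + p n * indicator {M<..} (real n / \<psi>))"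
  have gs: "summable g" unfolding g_def
    by (intro summable_add summable_mult summable_comparison_test'[OF sp]) (auto simp: p_nonneg indicator_def)
  have gv: "suminf g = e * F (\<psi> * y0) + F (\<psi> * M)"
  proof -
    have s1: "summable (\<lambda>n. p n * indicator {y0<..} (real n / \<psi>))" "summable (\<lambda>n. p n * indicator {M<..} (real n / \<psi>))"
      by (intro summable_comparison_test'[OF sp]; auto simp: p_nonneg indicator_def)+
    have "suminf g = (\<Sum>n. e * (p n * indicator {y0<..} (real n / \<psi>))) + (\<Sum>n. p n * indicator {M<..} (real n / \<psi>))"
      unfolding g_def by (rule suminf_add[symmetric]) (auto intro: summable_mult s1)
    also have "(\<Sum>n. e * (p n * indicator {y0<..} (real n / \<psi>))) = e * (\<Sum>n. p n * indicator {y0<..} (real n / \<psi>))"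
      by (rule suminf_mult[OF s1(1)])
    finally have "suminf g = e * (\<Sum>n. p n * indicator {y0<..} (real n / \<psi>)) + (\<Sum>n. p n * indicator {M<..} (real n / \<psi>))" .
    then show ?thesis unfolding ind_div(2)[OF psi] Fbar_def by simp
  qed
  have pw: "\<bar>p n * h (real n / \<psi>) - p n * \<sigma> (real n / \<psi>)\<bar> \<le> g n" for n
  proof -
    have "\<bar>h (real n / \<psi>) - \<sigma> (real n / \<psi>)\<bar> \<le> e * indicator {y0<..} (real n / \<psi>) + indicator {M<..} (real n / \<psi>)"
      unfolding \<sigma>_def aa_def b_def using psi by (intro step_approx[OF y0 w e M uc z h1]) auto
    then have "p n * \<bar>h (real n / \<psi>) - \<sigma> (real n / \<psi>)\<bar> \<le> p n * (e * indicator {y0<..} (real n / \<psi>) + indicator {M<..} (real n / \<psi>))"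
      using p_nonneg by (intro mult_left_mono) auto
    moreover have "\<bar>p n * h (real n / \<psi>) - p n * \<sigma> (real n / \<psi>)\<bar> = p n * \<bar>h (real n / \<psi>) - \<sigma> (real n / \<psi>)\<bar>"
      using p_nonneg[of n] by (simp add: abs_mult flip: right_diff_distrib)
    moreover have "p n * (e * indicator {y0<..} (real n / \<psi>) + indicator {M<..} (real n / \<psi>)) = g n"
      unfolding g_def by (simp add: algebra_simps)
    ultimately show ?thesis by simp
  qed
  have sd: "summable (\<lambda>n. p n * h (real n / \<psi>) - p n * \<sigma> (real n / \<psi>))" using sh ssig by (rule summable_diff)
  have "(\<Sum>n. p n * h (real n / \<psi>)) - (\<Sum>n. p n * \<sigma> (real n / \<psi>)) = (\<Sum>n. p n * h (real n / \<psi>) - p n * \<sigma> (real n / \<psi>))"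
    using sh ssig by (simp add: suminf_diff)
  also have "\<bar>\<dots>\<bar> \<le> suminf g"
  proof -
    have "(\<Sum>n. p n * h (real n / \<psi>) - p n * \<sigma> (real n / \<psi>)) \<le> suminf g"
      using pw by (intro suminf_le[OF _ sd gs]) (auto simp: abs_le_iff)
    moreover have "- suminf g \<le> (\<Sum>n. p n * h (real n / \<psi>) - p n * \<sigma> (real n / \<psi>))"
    proof -
      have "(\<Sum>n. - g n) \<le> (\<Sum>n. p n * h (real n / \<psi>) - p n * \<sigma> (real n / \<psi>))"
      proof (rule suminf_le[OF _ _ sd])
        show "summable (\<lambda>n. - g n)" using gs by (rule summable_minus)
        fix n show "- g n \<le> p n * h (real n / \<psi>) - p n * \<sigma> (real n / \<psi>)"
          using pw[of n] by linarith
      qed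
      then show ?thesis using gs by (simp add: suminf_minus)
    qed
    ultimately show ?thesis by simp
  qed
  finally show ?thesis unfolding Bsum gv aa_def b_def .
qed

end

context gwsetting begin

lemma MRV:
  fixes \<psi> c :: "nat \<Rightarrow> real" and h :: "real \<Rightarrow> real" and \<delta> :: real
  assumes psi: "\<forall>\<^sub>F k in sequentially. \<psi> k > 0"
    and cnn: "\<And>k. c k \<ge> 0"
    and T: "\<And>y. y > 0 \<Longrightarrow> ((\<lambda>k. c k * F (\<psi> k * y)) \<longlongrightarrow> y powr (-\<alpha>)) sequentially"
    and hc: "continuous_on {0..} h" and h01: "\<And>x. x \<ge> 0 \<Longrightarrow> 0 \<le> h x \<and> h x \<le> 1"
    and \<delta>: "\<delta> > 0" and hz: "\<And>x. 0 \<le> x \<Longrightarrow> x < \<delta> \<Longrightarrow> h x = 0"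
  shows "((\<lambda>k. c k * (\<Sum>n. p n * h (real n / \<psi> k))) \<longlongrightarrow> \<alpha> * (LBINT x:{0<..}. h x * x powr (-\<alpha>-1))) sequentially"
proof -
  have al: "\<alpha> > 0" using alpha by simp
  define I' where "I' = \<alpha> * (LBINT x:{0<..}. h x * x powr (-\<alpha>-1))"
  define y0 where "y0 = \<delta> / 2"
  have y0: "y0 > 0" "y0 < \<delta>" using \<delta> by (auto simp: y0_def)
  show ?thesis unfolding I'_def[symmetric] tendsto_iff
  proof (intro allI impI)
    fix \<epsilon> :: real assume \<epsilon>: "\<epsilon> > 0"
    define K where "K = 2 * y0 powr (-\<alpha>) + 5"
    have "y0 powr (-\<alpha>) \<ge> 0" by simp
    then have K: "K > 0" unfolding K_def by linarith
    define e where "e = \<epsilon> / K"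
    have e: "e > 0" using \<epsilon> K by (simp add: e_def)
    have "((\<lambda>M. M powr (-\<alpha>)) \<longlongrightarrow> 0) at_top" using al by (intro tendsto_neg_powr filterlim_ident) auto
    then have "\<forall>\<^sub>F M in at_top. M powr (-\<alpha>) < e" using e by (rule order_tendstoD)
    then obtain M where MeM: "M powr (-\<alpha>) < e" and My0: "M \<ge> y0 + 1"
      using eventually_conj[OF _ eventually_ge_at_top[of "y0 + 1"]]
      by (metis (mono_tags, lifting) eventually_at_top_linorder order_refl)
    have "uniformly_continuous_on {0..M} h"
      by (rule compact_uniformly_continuous[OF continuous_on_subset[OF hc]]) auto
    then obtain d where d: "d > 0" and dd': "\<And>x x'. x \<in> {0..M} \<Longrightarrow> x' \<in> {0..M} \<Longrightarrow> dist x' x < d \<Longrightarrow> dist (h x') (h x) < e"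
      unfolding uniformly_continuous_on_def using e by metis
    define m where "m = nat \<lceil>(M - y0) / d\<rceil> + 1"
    have m1: "real m > (M - y0) / d" "m \<ge> 1" unfolding m_def by linarith+
    define w where "w = (M - y0) / real m"
    have w: "w > 0" using My0 m1 by (simp add: w_def)
    have wd: "w < d" using m1 d My0 unfolding w_def by (simp add: field_simps)
    have Mw: "M = y0 + real m * w" using m1 by (simp add: w_def)
    have uc: "\<bar>h x - h x'\<bar> \<le> e" if "0 \<le> x" "x \<le> M" "0 \<le> x'" "x' \<le> M" "\<bar>x - x'\<bar> \<le> w" for x x'
      using dd'[of x' x] that wd by (auto simp: dist_real_def)
    have z: "h x = 0" if "0 \<le> x" "x \<le> y0" for x using hz that y0 by simp
    have h1: "\<bar>h x\<bar> \<le> 1" if "0 \<le> x" for x using h01[OF that] by simp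
    have hc': "continuous_on {0<..} h" by (rule continuous_on_subset[OF hc]) auto
    define LB where "LB = (\<Sum>j=1..m. h (y0 + real j * w) * ((y0 + (real j - 1) * w) powr (-\<alpha>) - (y0 + real j * w) powr (-\<alpha>)))"
    have intside: "\<bar>I' - LB\<bar> \<le> e * y0 powr (-\<alpha>) + M powr (-\<alpha>)"
      unfolding I'_def LB_def by (rule integral_side(2)[OF al y0(1) w less_imp_le[OF e] Mw uc z h1 hc']) auto
    define B where "B = (\<lambda>k. \<Sum>j=1..m. h (y0 + real j * w) * (F (\<psi> k * (y0 + (real j - 1) * w)) - F (\<psi> k * (y0 + real j * w))))"
    have aj: "y0 + (real j - 1) * w > 0" if "j \<in> {1..m}" for j
      using that y0 w by (smt (verit) atLeastAtMost_iff mult_nonneg_nonneg of_nat_1 of_nat_le_iff)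
    have bj: "y0 + real j * w > 0" for j using y0 w by (smt (verit) mult_nonneg_nonneg of_nat_0_le_iff)
    have limB: "((\<lambda>k. c k * B k) \<longlongrightarrow> LB) sequentially"
    proof -
      have "((\<lambda>k. \<Sum>j=1..m. h (y0 + real j * w) * (c k * F (\<psi> k * (y0 + (real j - 1) * w)) - c k * F (\<psi> k * (y0 + real j * w)))) \<longlongrightarrow> LB) sequentially"
        unfolding LB_def using aj bj by (intro tendsto_sum tendsto_mult tendsto_const tendsto_diff T) auto
      moreover have "(\<lambda>k. c k * B k) = (\<lambda>k. \<Sum>j=1..m. h (y0 + real j * w) * (c k * F (\<psi> k * (y0 + (real j - 1) * w)) - c k * F (\<psi> k * (y0 + real j * w))))"
        unfolding B_def by (intro ext) (simp add: sum_distrib_left algebra_simps)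
      ultimately show ?thesis by simp
    qed
    have limE: "((\<lambda>k. c k * (e * F (\<psi> k * y0) + F (\<psi> k * M))) \<longlongrightarrow> e * y0 powr (-\<alpha>) + M powr (-\<alpha>)) sequentially"
    proof -
      have "((\<lambda>k. e * (c k * F (\<psi> k * y0)) + c k * F (\<psi> k * M)) \<longlongrightarrow> e * y0 powr (-\<alpha>) + M powr (-\<alpha>)) sequentially"
        using y0 My0 by (intro tendsto_add tendsto_mult tendsto_const T) auto
      then show ?thesis by (simp add: algebra_simps)
    qed
    have ev1: "\<forall>\<^sub>F k in sequentially. \<bar>c k * B k - LB\<bar> < e"
      using limB e unfolding tendsto_iff dist_real_def by blast
    have ev2: "\<forall>\<^sub>F k in sequentially. c k * (e * F (\<psi> k * y0) + F (\<psi> k * M)) < e * y0 powr (-\<alpha>) + M powr (-\<alpha>) + e"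
      using limE e by (intro order_tendstoD) auto
    show "\<forall>\<^sub>F k in sequentially. dist (c k * (\<Sum>n. p n * h (real n / \<psi> k))) I' < \<epsilon>"
      using ev1 ev2 psi
    proof eventually_elim
      case (elim k)
      have ss: "\<bar>(\<Sum>n. p n * h (real n / \<psi> k)) - B k\<bar> \<le> e * F (\<psi> k * y0) + F (\<psi> k * M)"
        unfolding B_def by (rule sum_side[OF elim(3) y0(1) w less_imp_le[OF e] Mw uc z h1]) auto
      have "\<bar>c k * (\<Sum>n. p n * h (real n / \<psi> k)) - c k * B k\<bar> = c k * \<bar>(\<Sum>n. p n * h (real n / \<psi> k)) - B k\<bar>"
        using cnn[of k] by (simp add: abs_mult flip: right_diff_distrib)
      also have "\<dots> \<le> c k * (e * F (\<psi> k * y0) + F (\<psi> k * M))" using ss cnn[of k] by (intro mult_left_mono) auto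
      finally have t1: "\<bar>c k * (\<Sum>n. p n * h (real n / \<psi> k)) - c k * B k\<bar> < e * y0 powr (-\<alpha>) + M powr (-\<alpha>) + e"
        using elim(2) by linarith
      have "\<bar>c k * (\<Sum>n. p n * h (real n / \<psi> k)) - I'\<bar> < (e * y0 powr (-\<alpha>) + M powr (-\<alpha>) + e) + e + (e * y0 powr (-\<alpha>) + M powr (-\<alpha>))"
        using t1 elim(1) intside by linarith
      also have "\<dots> \<le> e * K"
        using MeM e unfolding K_def by (simp add: algebra_simps; linarith)
      also have "\<dots> = \<epsilon>" using K by (simp add: e_def)
      finally show ?case by (simp add: dist_real_def)
    qed
  qed
qed

end

context gwsetting begin

definition phk :: "nat \<Rightarrow> real" where "phk k = \<phi> (1 / (real k)^2)"

lemma eps_lim: "filterlim (\<lambda>k::nat. 1 / (real k)^2) (at_right 0) sequentially"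
  by real_asymp

lemma kF_lim: "((\<lambda>k. (real k)^2 * F (phk k)) \<longlongrightarrow> 1) sequentially"
proof -
  have "((\<lambda>k. F (\<phi> (1 / (real k)^2)) / (1 / (real k)^2)) \<longlongrightarrow> 1) sequentially"
    using filterlim_compose[OF phi_inv eps_lim] by (simp add: o_def)
  then show ?thesis by (simp add: phk_def mult.commute)
qed

lemma F_phk_0: "((\<lambda>k. F (phk k)) \<longlongrightarrow> 0) sequentially"
proof -
  have "((\<lambda>k. ((real k)^2 * F (phk k)) * (1 / (real k)^2)) \<longlongrightarrow> 1 * 0) sequentially"
    by (intro tendsto_mult kF_lim) real_asymp
  moreover have "\<forall>\<^sub>F k in sequentially. ((real k)^2 * F (phk k)) * (1 / (real k)^2) = F (phk k)"
    using eventually_gt_at_top[of "0::nat"] by eventually_elim simp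
  ultimately show ?thesis by (simp add: tendsto_cong)
qed

lemma phk_top: "filterlim phk at_top sequentially"
  unfolding filterlim_at_top
proof
  fix Z :: real
  have "F Z > 0" by (rule Fbar_pos)
  then have "\<forall>\<^sub>F k in sequentially. F (phk k) < F Z" using F_phk_0 by (intro order_tendstoD) auto
  then show "\<forall>\<^sub>F k in sequentially. Z \<le> phk k"
  proof eventually_elim
    case (elim k)
    show ?case
    proof (rule ccontr)
      assume "\<not> Z \<le> phk k"
      then have "F Z \<le> F (phk k)" by (intro Fbar_mono) auto
      then show False using elim by simp
    qed
  qed
qed

lemma phk_pos: "\<forall>\<^sub>F k in sequentially. phk k > 0"
  using phk_top by (simp add: filterlim_at_top_dense)

lemma T_lim: "y > 0 \<Longrightarrow> ((\<lambda>k. (real k)^2 * F (phk k * y)) \<longlongrightarrow> y powr (-\<alpha>)) sequentially"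
proof -
  assume y: "y > 0"
  have r: "((\<lambda>k. F (y * phk k) / F (phk k)) \<longlongrightarrow> y powr (-\<alpha>)) sequentially"
    using filterlim_compose[OF RV_real[OF y] phk_top] by (simp add: o_def)
  have "((\<lambda>k. ((real k)^2 * F (phk k)) * (F (y * phk k) / F (phk k))) \<longlongrightarrow> 1 * y powr (-\<alpha>)) sequentially"
    by (intro tendsto_mult kF_lim r)
  moreover have "((real k)^2 * F (phk k)) * (F (y * phk k) / F (phk k)) = (real k)^2 * F (phk k * y)" for k
    using Fbar_pos[of "phk k"] by (simp add: mult.commute)
  ultimately show ?thesis by simp
qed

lemma phk_over_k: "((\<lambda>k. phk k / real k) \<longlongrightarrow> 0) sequentially"
proof -
  have a1: "((\<lambda>k. (phk k)^2 * F (phk k)) \<longlongrightarrow> 0) sequentially"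
    using filterlim_compose[OF x2F_lim phk_top] by (simp add: o_def)
  have "((\<lambda>k. ((phk k)^2 * F (phk k)) / ((real k)^2 * F (phk k))) \<longlongrightarrow> 0 / 1) sequentially"
    by (intro tendsto_divide a1 kF_lim) auto
  moreover have "\<forall>\<^sub>F k in sequentially. ((phk k)^2 * F (phk k)) / ((real k)^2 * F (phk k)) = (phk k / real k)^2"
    using eventually_gt_at_top[of "0::nat"]
  proof eventually_elim
    case (elim k) then show ?case using Fbar_pos[of "phk k"] by (simp add: power_divide)
  qed
  ultimately have sq: "((\<lambda>k. (phk k / real k)^2) \<longlongrightarrow> 0) sequentially" by (simp add: tendsto_cong)
  have "((\<lambda>k. sqrt ((phk k / real k)^2)) \<longlongrightarrow> sqrt 0) sequentially" by (intro tendsto_real_sqrt sq)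
  then have "((\<lambda>k. \<bar>phk k / real k\<bar>) \<longlongrightarrow> 0) sequentially" by (simp only: real_sqrt_abs real_sqrt_zero)
  then show ?thesis by (rule tendsto_rabs_zero_cancel)
qed

lemma exp_lim: "((\<lambda>k. (real k)^2 * (exp (a / (real k)^2) - 1)) \<longlongrightarrow> a) sequentially"
proof (cases "a = 0")
  case True then show ?thesis by simp
next
  case False
  then have "a > 0" using a_nonneg by simp
  then show ?thesis by real_asymp
qed

end

context gwsetting begin

definition dlt where "dlt = (SOME \<delta>. \<delta> > 0 \<and> (\<forall>x. 0 \<le> x \<and> x < \<delta> \<longrightarrow> f x = 0))"

lemma dlt: "dlt > 0" "\<And>x. 0 \<le> x \<Longrightarrow> x < dlt \<Longrightarrow> f x = 0"
  using someI_ex[OF f_zero] unfolding dlt_def[symmetric] by auto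

definition hh :: "real \<Rightarrow> real" where "hh x = 1 - exp (- f x)"

definition uu :: "nat \<Rightarrow> real" where
  "uu k = infsum (\<lambda>t. gw_weight p t * exp (- a / (real k)^2 * real (tsize t) - node_sum (\<lambda>n. f (real n / phk k)) t)) UNIV"

definition EE :: "nat \<Rightarrow> real" where "EE k = (\<Sum>n. p n * hh (real n / phk k))"
definition DD :: "nat \<Rightarrow> real" where "DD k = (\<Sum>n. p n * hh (real n / phk k) * (uu k)^n)"

lemma Lbar_uu: "Lbar p a f \<phi> k = 1 - uu k"
  by (simp add: Lbar_def uu_def phk_def)

lemma hh01: "x \<ge> 0 \<Longrightarrow> 0 \<le> hh x \<and> hh x \<le> 1"
  using f_nonneg[of x] by (simp add: hh_def)

lemma per_k:
  assumes phk: "phk k > 0"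
  shows "0 \<le> uu k" "uu k \<le> 1"
    and "((real k) * (1 - uu k))^2 * RR (1 - uu k) = (real k)^2 * (exp (a / (real k)^2) - 1) * uu k + (real k)^2 * DD k"
    and "0 \<le> DD k" "DD k \<le> EE k"
    and "M' > 0 \<Longrightarrow> EE k - DD k \<le> M' * phk k * (1 - uu k) * F (phk k * (dlt / 2)) + F (phk k * M')"
proof -
  define c where "c = - a / (real k)^2"
  define g where "g = (\<lambda>n::nat. f (real n / phk k))"
  have c: "c \<le> 0" using a_nonneg by (simp add: c_def)
  have g: "g n \<ge> 0" for n using f_nonneg phk by (simp add: g_def)
  note fp = gw_fixpoint[OF p_nonneg p_prob c g]
  define u where "u = uu k"
  have uw: "u = infsum (\<lambda>t. gw_weight p t * exp (c * real (tsize t) - node_sum g t)) UNIV"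
    by (simp add: u_def uu_def c_def g_def)
  have u0: "0 \<le> u" and u1: "u \<le> 1" using fp(2,3) uw by simp_all
  then show "0 \<le> uu k" "uu k \<le> 1" by (simp_all add: u_def)
  have fx: "u = (\<Sum>n. p n * exp (c - g n) * u ^ n)" using fp(5) uw by simp
  have hg: "hh (real n / phk k) = 1 - exp (- g n)" for n by (simp add: hh_def g_def)
  have hn: "0 \<le> hh (real n / phk k) \<and> hh (real n / phk k) \<le> 1" for n using hh01 phk by simp
  have un: "0 \<le> u ^ n \<and> u ^ n \<le> 1" for n using u0 u1 by (simp add: power_le_one)
  have sG: "summable (\<lambda>n. p n * u ^ n)"
    by (rule summable_comparison_test'[OF sp]) (use un p_nonneg in \<open>auto intro: mult_left_le\<close>)
  have pb: "p n * hh (real n / phk k) * u ^ n \<le> p n" for n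
  proof -
    have "hh (real n / phk k) * u ^ n \<le> 1" using hn[of n] un[of n] by (intro mult_le_one) auto
    then show ?thesis using p_nonneg[of n] by (simp add: mult.assoc mult_left_le)
  qed
  have pnn: "0 \<le> p n * hh (real n / phk k) * u ^ n" for n using hn[of n] un[of n] p_nonneg[of n] by simp
  have sD: "summable (\<lambda>n. p n * hh (real n / phk k) * u ^ n)"
    by (rule summable_comparison_test'[OF sp]) (use pb pnn in auto)
  have sE: "summable (\<lambda>n. p n * hh (real n / phk k))"
    by (rule summable_comparison_test'[OF sp]) (use hn p_nonneg in \<open>auto simp: abs_mult intro: mult_left_le\<close>)
  have qb: "p n * exp (c - g n) * u ^ n \<le> p n" for n
  proof -
    have "exp (c - g n) \<le> 1" using c g[of n] by simp
    then have "exp (c - g n) * u ^ n \<le> 1" using un[of n] by (intro mult_le_one) auto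
    then show ?thesis using p_nonneg[of n] by (simp add: mult.assoc mult_left_le)
  qed
  have qnn: "0 \<le> p n * exp (c - g n) * u ^ n" for n using un[of n] p_nonneg[of n] by simp
  have sq: "summable (\<lambda>n. p n * exp (c - g n) * u ^ n)"
    by (rule summable_comparison_test'[OF sp]) (use qb qnn in auto)
  have "exp (- c) * u = (\<Sum>n. exp (- c) * (p n * exp (c - g n) * u ^ n))"
    using fx sq by (simp add: suminf_mult)
  also have "\<dots> = (\<Sum>n. p n * u ^ n - p n * hh (real n / phk k) * u ^ n)"
    by (intro suminf_cong) (simp add: hg algebra_simps exp_diff exp_minus field_simps)
  also have "\<dots> = (\<Sum>n. p n * u ^ n) - DD k"
    using sG sD by (simp add: suminf_diff DD_def u_def)
  finally have e1: "exp (- c) * u = (\<Sum>n. p n * u ^ n) - DD k" .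
  define L where "L = 1 - u"
  have L: "0 \<le> L" "L \<le> 1" using u0 u1 by (simp_all add: L_def)
  have "L ^ 2 * RR L = (\<Sum>n. p n * (1 - L) ^ n) - 1 + L" using R_id[OF L] by simp
  also have "\<dots> = (exp (- c) - 1) * u + DD k" using e1 by (simp add: L_def algebra_simps)
  finally have id: "L ^ 2 * RR L = (exp (- c) - 1) * u + DD k" .
  have "((real k) * (1 - uu k))^2 * RR (1 - uu k) = (real k)^2 * (L ^ 2 * RR L)"
    by (simp add: L_def u_def power_mult_distrib)
  also have "\<dots> = (real k)^2 * (exp (a / (real k)^2) - 1) * uu k + (real k)^2 * DD k"
    unfolding id by (simp add: c_def u_def algebra_simps)
  finally show "((real k) * (1 - uu k))^2 * RR (1 - uu k) = (real k)^2 * (exp (a / (real k)^2) - 1) * uu k + (real k)^2 * DD k" .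
  show "0 \<le> DD k" unfolding DD_def u_def[symmetric]
    by (rule suminf_nonneg[OF sD]) (use un hn p_nonneg in auto)
  show "DD k \<le> EE k" unfolding DD_def EE_def u_def[symmetric]
    by (rule suminf_le[OF _ sD sE]) (use un hn p_nonneg in \<open>auto intro!: mult_left_le\<close>)
  assume M': "M' > 0"
  define g1 where "g1 = (\<lambda>n. M' * phk k * L * (if real n > phk k * (dlt / 2) then p n else 0) + (if real n > phk k * M' then p n else 0))"
  have sg1: "summable g1" unfolding g1_def
    by (intro summable_add summable_mult Fbar_summable)
  have g1v: "suminf g1 = M' * phk k * L * F (phk k * (dlt / 2)) + F (phk k * M')"
  proof -
    have "suminf g1 = (\<Sum>n. M' * phk k * L * (if real n > phk k * (dlt / 2) then p n else 0)) + (\<Sum>n. if real n > phk k * M' then p n else 0)"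
      unfolding g1_def by (rule suminf_add[symmetric], rule summable_mult[OF Fbar_summable], rule Fbar_summable)
    also have "(\<Sum>n. M' * phk k * L * (if real n > phk k * (dlt / 2) then p n else 0)) = M' * phk k * L * F (phk k * (dlt / 2))"
      unfolding Fbar_def by (rule suminf_mult[OF Fbar_summable])
    finally show ?thesis unfolding Fbar_def by simp
  qed
  have pw: "p n * hh (real n / phk k) - p n * hh (real n / phk k) * u ^ n \<le> g1 n" for n
  proof -
    have lhs: "p n * hh (real n / phk k) - p n * hh (real n / phk k) * u ^ n = p n * hh (real n / phk k) * (1 - u ^ n)"
      by (simp add: algebra_simps)
    have b1: "1 - u ^ n \<le> real n * L"
    proof -
      have "1 + real n * (- L) \<le> (1 + - L) ^ n" using L by (intro Bernoulli_inequality) simp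
      then show ?thesis by (simp add: L_def algebra_simps)
    qed
    have b0: "0 \<le> 1 - u ^ n" using un by simp
    have g1nn: "0 \<le> M' * phk k * L * (if real n > phk k * (dlt / 2) then p n else 0)"
      using M' phk L p_nonneg by simp
    show ?thesis
    proof (cases "real n / phk k < dlt")
      case True
      then have "hh (real n / phk k) = 0" using dlt phk by (simp add: hh_def)
      then show ?thesis unfolding lhs g1_def using g1nn p_nonneg by simp
    next
      case False
      then have "real n \<ge> dlt * phk k" using phk by (simp add: field_simps)
      moreover have "dlt * phk k > 0" using phk dlt by simp
      ultimately have n1: "real n > phk k * (dlt / 2)" by (simp add: algebra_simps)
      show ?thesis
      proof (cases "real n > phk k * M'")
        case True
        have "p n * hh (real n / phk k) * (1 - u ^ n) \<le> p n * 1 * 1"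
          using hn[of n] b0 un[of n] p_nonneg[of n] by (intro mult_mono) auto
        then show ?thesis unfolding lhs g1_def using True g1nn by simp
      next
        case False
        have "real n * L \<le> phk k * M' * L" using False L by (intro mult_right_mono) auto
        then have "p n * hh (real n / phk k) * (1 - u ^ n) \<le> p n * 1 * (M' * phk k * L)"
          using hn[of n] b0 b1 p_nonneg[of n] by (intro mult_mono) (auto simp: algebra_simps)
        then show ?thesis unfolding lhs g1_def using False n1 p_nonneg[of n] by (simp add: algebra_simps)
      qed
    qed
  qed
  have "EE k - DD k = (\<Sum>n. p n * hh (real n / phk k) - p n * hh (real n / phk k) * u ^ n)"
    unfolding EE_def DD_def u_def[symmetric] using sE sD by (simp add: suminf_diff)
  also have "\<dots> \<le> suminf g1"
    by (rule suminf_le[OF pw summable_diff[OF sE sD] sg1])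
  finally show "EE k - DD k \<le> M' * phk k * (1 - uu k) * F (phk k * (dlt / 2)) + F (phk k * M')"
    unfolding g1v L_def u_def .
qed

end

context gwsetting begin

lemma hh_cont: "continuous_on {0..} hh"
  unfolding hh_def by (intro continuous_intros f_cont)

lemma EE_lim: "((\<lambda>k. (real k)^2 * EE k) \<longlongrightarrow> \<alpha> * (LBINT x:{0<..}. hh x * x powr (-\<alpha>-1))) sequentially"
  unfolding EE_def
  by (rule MRV[OF phk_pos _ T_lim hh_cont hh01 dlt(1)]) (auto simp: hh_def dlt(2))

lemma main:
  "((\<lambda>k. real k * Lbar p a f \<phi> k) \<longlongrightarrow>
      sqrt 2 / gw_sigma p * sqrt (a + \<alpha> * (LBINT x:{0<..}. (1 - exp (- f x)) * x powr (-\<alpha> - 1)))) sequentially"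
proof -
  define I where "I = \<alpha> * (LBINT x:{0<..}. hh x * x powr (-\<alpha>-1))"
  define L where "L = (\<lambda>k. 1 - uu k)"
  define B where "B = (\<lambda>k. (real k)^2 * (exp (a / (real k)^2) - 1) * uu k + (real k)^2 * DD k)"
  define U where "U = (\<lambda>k. (real k)^2 * (exp (a / (real k)^2) - 1) + (real k)^2 * EE k)"
  have EEl: "((\<lambda>k. (real k)^2 * EE k) \<longlongrightarrow> I) sequentially" unfolding I_def by (rule EE_lim)
  have Ul: "(U \<longlongrightarrow> a + I) sequentially" unfolding U_def by (intro tendsto_add exp_lim EEl)
  obtain c0 where c0: "c0 > 0" "\<And>x. 0 \<le> x \<and> x \<le> 1 \<Longrightarrow> RR x \<ge> c0" using R_lower by blast
  have L01: "\<forall>\<^sub>F k in sequentially. 0 \<le> L k \<and> L k \<le> 1"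
    using phk_pos by eventually_elim (use per_k(1,2) in \<open>auto simp: L_def\<close>)
  have expnn: "exp (a / (real k)^2) - 1 \<ge> 0" for k using a_nonneg by simp
  have BU: "\<forall>\<^sub>F k in sequentially. (real k * L k)^2 * RR (L k) = B k \<and> B k \<le> U k"
    using phk_pos
  proof eventually_elim
    case (elim k)
    note pk = per_k[OF elim]
    have e1: "(real k * L k)^2 * RR (L k) = B k" using pk(3) by (simp add: L_def B_def)
    have "(real k)^2 * (exp (a / (real k)^2) - 1) * uu k \<le> (real k)^2 * (exp (a / (real k)^2) - 1) * 1"
      using pk(2) expnn[of k] by (intro mult_left_mono) auto
    moreover have "(real k)^2 * DD k \<le> (real k)^2 * EE k" using pk(5) by (intro mult_left_mono) auto
    ultimately have "B k \<le> U k" by (simp add: B_def U_def)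
    then show ?case using e1 by simp
  qed
  define Kb where "Kb = sqrt ((a + I + 1) / c0)"
  have kLb: "\<forall>\<^sub>F k in sequentially. 0 \<le> real k * L k \<and> real k * L k \<le> Kb"
  proof -
    have "\<forall>\<^sub>F k in sequentially. U k < a + I + 1" using Ul by (intro order_tendstoD) auto
    then show ?thesis using BU L01
    proof eventually_elim
      case (elim k)
      have "c0 * (real k * L k)^2 \<le> RR (L k) * (real k * L k)^2"
        using c0(2)[of "L k"] elim(3) by (intro mult_right_mono) auto
      also have "\<dots> = B k" using elim(2) by (simp add: mult.commute)
      also have "\<dots> < a + I + 1" using elim by linarith
      finally have "(real k * L k)^2 < (a + I + 1) / c0" using c0(1) by (simp add: field_simps)
      then have "sqrt ((real k * L k)^2) \<le> Kb" unfolding Kb_def by (intro real_sqrt_le_mono) simp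
      moreover have "0 \<le> real k * L k" using elim(3) by simp
      ultimately show ?case by simp
    qed
  qed
  have Ll: "(L \<longlongrightarrow> 0) sequentially"
  proof (rule tendsto_sandwich[of "\<lambda>_. 0" _ _ "\<lambda>k. Kb / real k"])
    show "\<forall>\<^sub>F k in sequentially. 0 \<le> L k" using L01 by eventually_elim simp
    show "\<forall>\<^sub>F k in sequentially. L k \<le> Kb / real k"
      using kLb eventually_gt_at_top[of "0::nat"]
      by eventually_elim (simp add: field_simps mult.commute)
    show "((\<lambda>k. Kb / real k) \<longlongrightarrow> 0) sequentially" by real_asymp
  qed simp
  have phL: "((\<lambda>k. phk k * L k) \<longlongrightarrow> 0) sequentially"
  proof (rule tendsto_sandwich[of "\<lambda>_. 0" _ _ "\<lambda>k. (phk k / real k) * Kb"])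
    show "\<forall>\<^sub>F k in sequentially. 0 \<le> phk k * L k" using L01 phk_pos by eventually_elim simp
    show "\<forall>\<^sub>F k in sequentially. phk k * L k \<le> (phk k / real k) * Kb"
      using kLb phk_pos eventually_gt_at_top[of "0::nat"]
    proof eventually_elim
      case (elim k)
      have "phk k * L k = (phk k / real k) * (real k * L k)" using elim by simp
      also have "\<dots> \<le> (phk k / real k) * Kb" using elim by (intro mult_left_mono) auto
      finally show ?case .
    qed
    show "((\<lambda>k. (phk k / real k) * Kb) \<longlongrightarrow> 0) sequentially"
      using tendsto_mult[OF phk_over_k tendsto_const[of Kb]] by simp
  qed simp
  have EDl: "((\<lambda>k. (real k)^2 * (EE k - DD k)) \<longlongrightarrow> 0) sequentially"
    unfolding tendsto_iff dist_real_def
  proof (intro allI impI)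
    fix \<epsilon> :: real assume \<epsilon>: "\<epsilon> > 0"
    have "((\<lambda>M. M powr (-\<alpha>)) \<longlongrightarrow> 0) at_top" using alpha by (intro tendsto_neg_powr filterlim_ident) auto
    then have "\<forall>\<^sub>F M in at_top. M powr (-\<alpha>) < \<epsilon> / 2" using \<epsilon> by (intro order_tendstoD) auto
    then obtain M' where M': "M' powr (-\<alpha>) < \<epsilon> / 2" "M' \<ge> 1"
      using eventually_conj[OF _ eventually_ge_at_top[of "1::real"]]
      by (metis (mono_tags, lifting) eventually_at_top_linorder order_refl)
    have lim: "((\<lambda>k. M' * (phk k * L k) * ((real k)^2 * F (phk k * (dlt / 2))) + (real k)^2 * F (phk k * M'))
        \<longlongrightarrow> M' * 0 * (dlt / 2) powr (-\<alpha>) + M' powr (-\<alpha>)) sequentially"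
      using dlt(1) M' by (intro tendsto_add tendsto_mult tendsto_const phL T_lim) auto
    have "\<forall>\<^sub>F k in sequentially. M' * (phk k * L k) * ((real k)^2 * F (phk k * (dlt / 2))) + (real k)^2 * F (phk k * M') < \<epsilon>"
      by (rule order_tendstoD(2)[OF lim]) (use M' \<epsilon> in simp)
    then show "\<forall>\<^sub>F k in sequentially. \<bar>(real k)^2 * (EE k - DD k) - 0\<bar> < \<epsilon>"
      using phk_pos
    proof eventually_elim
      case (elim k)
      note pk = per_k[OF elim(2)]
      have "EE k - DD k \<le> M' * phk k * (1 - uu k) * F (phk k * (dlt / 2)) + F (phk k * M')"
        using M' by (intro pk(6)) auto
      then have "(real k)^2 * (EE k - DD k) \<le> (real k)^2 * (M' * phk k * (1 - uu k) * F (phk k * (dlt / 2)) + F (phk k * M'))"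
        by (intro mult_left_mono) auto
      also have "\<dots> = M' * (phk k * L k) * ((real k)^2 * F (phk k * (dlt / 2))) + (real k)^2 * F (phk k * M')"
        by (simp add: L_def algebra_simps)
      finally have up: "(real k)^2 * (EE k - DD k) < \<epsilon>" using elim(1) by linarith
      have "(real k)^2 * (EE k - DD k) \<ge> 0" using pk(5) by simp
      then show ?case using up by simp
    qed
  qed
  have DDl: "((\<lambda>k. (real k)^2 * DD k) \<longlongrightarrow> I - 0) sequentially"
  proof -
    have "((\<lambda>k. (real k)^2 * EE k - (real k)^2 * (EE k - DD k)) \<longlongrightarrow> I - 0) sequentially"
      by (intro tendsto_diff EEl EDl)
    then show ?thesis by (simp add: algebra_simps)
  qed
  have uul: "(uu \<longlongrightarrow> 1) sequentially"
  proof -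
    have "((\<lambda>k. 1 - L k) \<longlongrightarrow> 1 - 0) sequentially" by (intro tendsto_diff tendsto_const Ll)
    then show ?thesis by (simp add: L_def)
  qed
  have Bl: "(B \<longlongrightarrow> a * 1 + (I - 0)) sequentially"
    unfolding B_def by (intro tendsto_add tendsto_mult exp_lim uul DDl)
  have Rl: "((\<lambda>k. RR (L k)) \<longlongrightarrow> RR 0) sequentially"
    by (rule continuous_within_tendsto_compose[OF R_cont _ Ll]) (use L01 in \<open>auto elim: eventually_mono\<close>)
  have R0': "RR 0 = s2 / 2" by (rule R0)
  have sq: "((\<lambda>k. (real k * L k)^2) \<longlongrightarrow> (a + I) / (s2 / 2)) sequentially"
  proof -
    have "((\<lambda>k. B k / RR (L k)) \<longlongrightarrow> (a * 1 + (I - 0)) / RR 0) sequentially"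
      using s2_pos R0' by (intro tendsto_divide Bl Rl) auto
    moreover have "\<forall>\<^sub>F k in sequentially. B k / RR (L k) = (real k * L k)^2"
      using BU L01
    proof eventually_elim
      case (elim k)
      have "RR (L k) \<ge> c0" using c0(2) elim(2) by simp
      then have "RR (L k) \<noteq> 0" using c0(1) by simp
      then show ?case using elim(1) by (simp add: field_simps)
    qed
    ultimately show ?thesis using R0' by (simp add: tendsto_cong)
  qed
  have "((\<lambda>k. sqrt ((real k * L k)^2)) \<longlongrightarrow> sqrt ((a + I) / (s2 / 2))) sequentially"
    by (intro tendsto_real_sqrt sq)
  moreover have "\<forall>\<^sub>F k in sequentially. sqrt ((real k * L k)^2) = real k * Lbar p a f \<phi> k"
    using kLb by eventually_elim (simp add: L_def Lbar_uu)
  ultimately have fin: "((\<lambda>k. real k * Lbar p a f \<phi> k) \<longlongrightarrow> sqrt ((a + I) / (s2 / 2))) sequentially"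
    by (simp add: tendsto_cong)
  have "sqrt ((a + I) / (s2 / 2)) = sqrt 2 / gw_sigma p * sqrt (a + I)"
  proof -
    have "(a + I) / (s2 / 2) = (2 * (a + I)) / s2" by simp
    then have "sqrt ((a + I) / (s2 / 2)) = sqrt 2 * sqrt (a + I) / sqrt s2"
      by (simp only: real_sqrt_divide real_sqrt_mult)
    then show ?thesis unfolding gw_sigma_def s2_def[symmetric] by simp
  qed
  moreover have "I = \<alpha> * (LBINT x:{0<..}. (1 - exp (- f x)) * x powr (-\<alpha> - 1))"
    unfolding I_def hh_def ..
  ultimately show ?thesis using fin by simp
qed

end

theorem lemma2:
  fixes p :: "nat \<Rightarrow> real" and \<alpha> a :: real and l \<phi> f :: "real \<Rightarrow> real"
  assumes p_nonneg: "\<And>n. p n \<ge> 0"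
    and p_prob: "p sums 1"
    and p_crit: "(\<lambda>n. real n * p n) sums 1"
    and p_nondeg: "p 1 \<noteq> 1"
    and alpha: "\<alpha> > 2"
    and l_sv: "slowly_varying l"
    and tail: "\<And>n::nat. n \<ge> 1 \<Longrightarrow> Fbar p (real n) = real n powr (-\<alpha>) * l (real n)"
    and phi_inv: "((\<lambda>\<epsilon>. Fbar p (\<phi> \<epsilon>) / \<epsilon>) \<longlongrightarrow> 1) (at_right 0)"
    and f_cont: "continuous_on {0..} f"
    and f_nonneg: "\<And>x. x \<ge> 0 \<Longrightarrow> f x \<ge> 0"
    and f_zero: "\<exists>\<delta>>0. \<forall>x. 0 \<le> x \<and> x < \<delta> \<longrightarrow> f x = 0"
    and a_nonneg: "a \<ge> 0"
  shows "((\<lambda>k. real k * Lbar p a f \<phi> k) \<longlongrightarrow>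
           sqrt 2 / gw_sigma p *
           sqrt (a + \<alpha> * (LBINT x:{0<..}. (1 - exp (- f x)) * x powr (-\<alpha> - 1)))) sequentially"
proof -
  interpret gwsetting p \<alpha> a l \<phi> f
    by (unfold_locales) (use assms in auto)
  show ?thesis by (rule main)
qed

end
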